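(* Let $u$ be a strictly convex function of $(x_1,x_2)$ with Legendre transform $u^*(\xi_1,\xi_2)$, where $\xi_i=\partial u/\partial x_i$. Then $u$ satisfies equation (2) associated with $\psi$ if and only if $u^*$ satisfies equation (2) (in the variables $\xi_1,\xi_2$) associated with the function $\psi^*(t)=t\,\psi(t^{-1})$, which is again smooth and strictly convex on $(0,\infty)$.
   Context: For a smooth strictly convex $\psi$ on $(0,\infty)$ and a strictly convex function $u(x_1,\dots,x_n)$ write $u_{ij}=\partial^2u/\partial x_i\partial x_j$, $J=\det(u_{ij})$, and $(u^{ij})$ for the inverse of $(u_{ij})$. Equation (2) associated with $\psi$ is $\sum_{i,j}\frac{\partial^{2}}{\partial x_i\partial x_j}\big(J\psi'(J)u^{ij}\big)=0$, the Euler–Lagrange equation of $\int\psi(J)\,dx$. The Legendre transform is $u^*(\xi)=\sum_i x_i\xi_i-u(x)$ with $\xi=\nabla u(x)$. *)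

theory Defs
  imports "HOL-Analysis.Analysis"
begin

definition strict_convex_on :: "'a::real_vector set \<Rightarrow> ('a \<Rightarrow> real) \<Rightarrow> bool" where
  "strict_convex_on S f \<longleftrightarrow> convex S \<and>
     (\<forall>x\<in>S. \<forall>y\<in>S. \<forall>t. x \<noteq> y \<longrightarrow> 0 < t \<longrightarrow> t < 1 \<longrightarrow>
        f ((1 - t) *\<^sub>R x + t *\<^sub>R y) < (1 - t) * f x + t * f y)"

definition smooth1_on :: "real set \<Rightarrow> (real \<Rightarrow> real) \<Rightarrow> bool" where
  "smooth1_on S f \<longleftrightarrow> (\<forall>k. \<forall>x\<in>S. (deriv ^^ k) f differentiable (at x))"

definition pd :: "nat \<Rightarrow> (real \<times> real \<Rightarrow> real) \<Rightarrow> real \<times> real \<Rightarrow> real" where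
  "pd i f p = (if i = 1 then deriv (\<lambda>s. f (s, snd p)) (fst p)
               else deriv (\<lambda>t. f (fst p, t)) (snd p))"

fun Ck_on :: "nat \<Rightarrow> (real \<times> real) set \<Rightarrow> (real \<times> real \<Rightarrow> real) \<Rightarrow> bool" where
  "Ck_on 0 S f = continuous_on S f"
| "Ck_on (Suc k) S f = ((\<forall>p\<in>S. f differentiable (at p)) \<and> Ck_on k S (pd 1 f) \<and> Ck_on k S (pd 2 f))"

definition smooth2_on :: "(real \<times> real) set \<Rightarrow> (real \<times> real \<Rightarrow> real) \<Rightarrow> bool" where
  "smooth2_on S f \<longleftrightarrow> (\<forall>k. Ck_on k S f)"

definition hess :: "(real \<times> real \<Rightarrow> real) \<Rightarrow> nat \<Rightarrow> nat \<Rightarrow> real \<times> real \<Rightarrow> real" where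
  "hess u i j p = pd i (pd j u) p"

definition hessdet :: "(real \<times> real \<Rightarrow> real) \<Rightarrow> real \<times> real \<Rightarrow> real" where
  "hessdet u p = hess u 1 1 p * hess u 2 2 p - hess u 1 2 p * hess u 2 1 p"

definition hessinv :: "(real \<times> real \<Rightarrow> real) \<Rightarrow> nat \<Rightarrow> nat \<Rightarrow> real \<times> real \<Rightarrow> real" where
  "hessinv u i j p =
     (if i = 1 \<and> j = 1 then hess u 2 2 p
      else if i = 2 \<and> j = 2 then hess u 1 1 p
      else - hess u i j p) / hessdet u p"

definition eq2_lhs :: "(real \<Rightarrow> real) \<Rightarrow> (real \<times> real \<Rightarrow> real) \<Rightarrow> real \<times> real \<Rightarrow> real" where
  "eq2_lhs \<psi> u p = (\<Sum>i\<in>{1,2}. \<Sum>j\<in>{1,2}.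
      pd i (pd j (\<lambda>q. hessdet u q * deriv \<psi> (hessdet u q) * hessinv u i j q)) p)"

definition satisfies_eq2 :: "(real \<Rightarrow> real) \<Rightarrow> (real \<times> real) set \<Rightarrow> (real \<times> real \<Rightarrow> real) \<Rightarrow> bool" where
  "satisfies_eq2 \<psi> S u \<longleftrightarrow> (\<forall>p\<in>S. eq2_lhs \<psi> u p = 0)"

definition grad :: "(real \<times> real \<Rightarrow> real) \<Rightarrow> real \<times> real \<Rightarrow> real \<times> real" where
  "grad u p = (pd 1 u p, pd 2 u p)"

definition is_legendre_transform ::
  "(real \<times> real) set \<Rightarrow> (real \<times> real \<Rightarrow> real) \<Rightarrow> (real \<times> real \<Rightarrow> real) \<Rightarrow> bool" where
  "is_legendre_transform S u ustar \<longleftrightarrow>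
     (\<forall>x\<in>S. ustar (grad u x) = fst x * fst (grad u x) + snd x * snd (grad u x) - u x)"

definition psi_star :: "(real \<Rightarrow> real) \<Rightarrow> real \<Rightarrow> real" where
  "psi_star \<psi> t = t * \<psi> (inverse t)"

end

theory Submission
  imports Defs
begin


lemma pd_has_derivative:
  assumes "(f has_derivative D) (at p)"
  shows "pd 1 f p = D (1,0)" "pd 2 f p = D (0,1)"
proof -
  have lin: "linear D" using assms has_derivative_linear by blast
  have d1: "((\<lambda>s. f (s, snd p)) has_derivative (\<lambda>s. D (s,0))) (at (fst p))"
  proof -
    have "((\<lambda>s. (s, snd p)) has_derivative (\<lambda>s. (s,0))) (at (fst p))"
      by (auto intro!: derivative_eq_intros)
    moreover have "(f has_derivative D) (at (fst p, snd p))" using assms by simp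
    ultimately show ?thesis using has_derivative_compose by fastforce
  qed
  have "(\<lambda>s. D (s,0)) = (\<lambda>s. D (1,0) * s)"
  proof
    fix s::real have "(s,0::real) = s *\<^sub>R (1,0)" by simp
    then show "D (s,0) = D (1,0) * s" using linear_scale[OF lin, of s "(1,0)"] by (simp add: mult.commute)
  qed
  with d1 have "((\<lambda>s. f (s, snd p)) has_real_derivative D (1,0)) (at (fst p))"
    by (simp add: has_field_derivative_def)
  then show "pd 1 f p = D (1,0)" unfolding pd_def by (simp add: DERIV_imp_deriv)
  have d2: "((\<lambda>s. f (fst p, s)) has_derivative (\<lambda>s. D (0,s))) (at (snd p))"
  proof -
    have "((\<lambda>s. (fst p, s)) has_derivative (\<lambda>s. (0,s))) (at (snd p))"
      by (auto intro!: derivative_eq_intros)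
    moreover have "(f has_derivative D) (at (fst p, snd p))" using assms by simp
    ultimately show ?thesis using has_derivative_compose by fastforce
  qed
  have "(\<lambda>s. D (0,s)) = (\<lambda>s. D (0,1) * s)"
  proof
    fix s::real have "(0::real,s) = s *\<^sub>R (0,1)" by simp
    then show "D (0,s) = D (0,1) * s" using linear_scale[OF lin, of s "(0,1)"] by (simp add: mult.commute)
  qed
  with d2 have "((\<lambda>s. f (fst p, s)) has_real_derivative D (0,1)) (at (snd p))"
    by (simp add: has_field_derivative_def)
  then show "pd 2 f p = D (0,1)" unfolding pd_def by (simp add: DERIV_imp_deriv)
qed

lemma frechet:
  assumes "f differentiable (at p)"
  shows "(f has_derivative (\<lambda>h. pd 1 f p * fst h + pd 2 f p * snd h)) (at p)"
proof -
  obtain D where D: "(f has_derivative D) (at p)" using assms differentiable_def by blast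
  have lin: "linear D" using D has_derivative_linear by blast
  have "D = (\<lambda>h. pd 1 f p * fst h + pd 2 f p * snd h)"
  proof
    fix h :: "real \<times> real"
    have "h = fst h *\<^sub>R (1,0) + snd h *\<^sub>R (0,1)" by (cases h) simp
    then have "D h = D (fst h *\<^sub>R (1,0) + snd h *\<^sub>R (0,1))" by simp
    also have "\<dots> = fst h * D (1,0) + snd h * D (0,1)"
      by (simp only: linear_add[OF lin] linear_scale[OF lin] real_scaleR_def)
    finally show "D h = pd 1 f p * fst h + pd 2 f p * snd h"
      using pd_has_derivative[OF D] by (simp add: mult.commute)
  qed
  then show ?thesis using D by simp
qed

lemma pd_sec1:
  assumes "f differentiable (at (s,y))"
  shows "((\<lambda>s. f (s,y)) has_real_derivative pd 1 f (s,y)) (at s)"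
proof -
  have "((\<lambda>s. (s, y)) has_derivative (\<lambda>s. (s,0))) (at s)"
    by (auto intro!: derivative_eq_intros)
  note c = has_derivative_compose[OF this frechet[OF assms]]
  have e: "(\<lambda>x. x * c) = (*) c" for c :: real by auto
  show ?thesis using c by (simp add: has_field_derivative_def o_def e)
qed

lemma pd_sec2:
  assumes "f differentiable (at (s,y))"
  shows "((\<lambda>y. f (s,y)) has_real_derivative pd 2 f (s,y)) (at y)"
proof -
  have "((\<lambda>y. (s, y)) has_derivative (\<lambda>y. (0,y))) (at y)"
    by (auto intro!: derivative_eq_intros)
  note c = has_derivative_compose[OF this frechet[OF assms]]
  have e: "(\<lambda>x. x * c) = (*) c" for c :: real by auto
  show ?thesis using c by (simp add: has_field_derivative_def o_def e)
qed


lemma pd_split: "pd i f p = (if i = 1 then pd 1 f p else pd 2 f p)"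
  unfolding pd_def by simp

lemma pd_eq:
  assumes "(f has_derivative (\<lambda>h. a * fst h + b * snd h)) (at p)"
  shows "pd i f p = (if i = 1 then a else b)"
  using pd_has_derivative[OF assms] by (subst pd_split) simp

lemma pd_add:
  assumes "f differentiable (at p)" "g differentiable (at p)"
  shows "pd i (\<lambda>x. f x + g x) p = pd i f p + pd i g p"
proof -
  have "((\<lambda>x. f x + g x) has_derivative (\<lambda>h. (pd 1 f p + pd 1 g p) * fst h + (pd 2 f p + pd 2 g p) * snd h)) (at p)"
    using has_derivative_add[OF frechet[OF assms(1)] frechet[OF assms(2)]]
    by (simp add: algebra_simps)
  from pd_eq[OF this] show ?thesis by (subst (2 3) pd_split) simp
qed

lemma pd_diff:
  assumes "f differentiable (at p)" "g differentiable (at p)"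
  shows "pd i (\<lambda>x. f x - g x) p = pd i f p - pd i g p"
proof -
  have "((\<lambda>x. f x - g x) has_derivative (\<lambda>h. (pd 1 f p - pd 1 g p) * fst h + (pd 2 f p - pd 2 g p) * snd h)) (at p)"
    using has_derivative_diff[OF frechet[OF assms(1)] frechet[OF assms(2)]]
    by (simp add: algebra_simps)
  from pd_eq[OF this] show ?thesis by (subst (2 3) pd_split) simp
qed

lemma pd_mult:
  assumes "f differentiable (at p)" "g differentiable (at p)"
  shows "pd i (\<lambda>x. f x * g x) p = pd i f p * g p + f p * pd i g p"
proof -
  have "((\<lambda>x. f x * g x) has_derivative (\<lambda>h. (pd 1 f p * g p + f p * pd 1 g p) * fst h + (pd 2 f p * g p + f p * pd 2 g p) * snd h)) (at p)"
    using has_derivative_mult[OF frechet[OF assms(1)] frechet[OF assms(2)]]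
    by (simp add: algebra_simps)
  from pd_eq[OF this] show ?thesis by (subst (2 3) pd_split) simp
qed

lemma pd_const: "pd i (\<lambda>x. c) p = 0"
proof -
  have "((\<lambda>x. c) has_derivative (\<lambda>h. 0 * fst h + 0 * snd h)) (at p)" by simp
  from pd_eq[OF this] show ?thesis by simp
qed

lemma pd_fst: "pd i fst p = (if i = 1 then 1 else 0)"
proof -
  have "(fst has_derivative (\<lambda>h. 1 * fst h + 0 * snd h)) (at p)"
    by (simp add: has_derivative_fst[OF has_derivative_ident, simplified])
  from pd_eq[OF this] show ?thesis by simp
qed

lemma pd_snd: "pd i snd p = (if i = 1 then 0 else 1)"
proof -
  have "(snd has_derivative (\<lambda>h. 0 * fst h + 1 * snd h)) (at p)"
    by (simp add: has_derivative_snd[OF has_derivative_ident, simplified])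
  from pd_eq[OF this] show ?thesis by simp
qed

lemma pd_comp1:
  assumes "(\<phi> has_real_derivative d) (at (f p))" "f differentiable (at p)"
  shows "pd i (\<lambda>x. \<phi> (f x)) p = d * pd i f p"
proof -
  have "((\<lambda>x. \<phi> (f x)) has_derivative (\<lambda>h. (d * pd 1 f p) * fst h + (d * pd 2 f p) * snd h)) (at p)"
    using has_derivative_compose[OF frechet[OF assms(2)] assms(1)[unfolded has_field_derivative_def]]
    by (simp add: algebra_simps)
  from pd_eq[OF this] show ?thesis by (subst (2) pd_split) simp
qed

lemma pd_comp2:
  assumes "X1 differentiable (at p)" "X2 differentiable (at p)" "g differentiable (at (X1 p, X2 p))"
  shows "pd i (\<lambda>x. g (X1 x, X2 x)) p =
     pd 1 g (X1 p, X2 p) * pd i X1 p + pd 2 g (X1 p, X2 p) * pd i X2 p"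
proof -
  have X: "((\<lambda>x. (X1 x, X2 x)) has_derivative
      (\<lambda>h. (pd 1 X1 p * fst h + pd 2 X1 p * snd h, pd 1 X2 p * fst h + pd 2 X2 p * snd h))) (at p)"
    using has_derivative_Pair[OF frechet[OF assms(1)] frechet[OF assms(2)]] by simp
  have "((\<lambda>x. g (X1 x, X2 x)) has_derivative (\<lambda>h.
     (pd 1 g (X1 p, X2 p) * pd 1 X1 p + pd 2 g (X1 p, X2 p) * pd 1 X2 p) * fst h +
     (pd 1 g (X1 p, X2 p) * pd 2 X1 p + pd 2 g (X1 p, X2 p) * pd 2 X2 p) * snd h)) (at p)"
    using has_derivative_compose[OF X frechet[OF assms(3)]]
    by (simp add: algebra_simps)
  from pd_eq[OF this] show ?thesis by (subst (3 4) pd_split) simp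
qed

lemma pd_cong:
  assumes "open U" "p \<in> U" "\<And>x. x \<in> U \<Longrightarrow> f x = g x"
  shows "pd i f p = pd i g p"
proof -
  obtain e where e: "e > 0" "ball p e \<subseteq> U" using assms openE by blast
  have 1: "eventually (\<lambda>s. f (s, snd p) = g (s, snd p)) (nhds (fst p))"
    unfolding eventually_nhds_metric
  proof (intro exI[of _ e] conjI allI impI)
    fix s assume "dist s (fst p) < e"
    then have "(s, snd p) \<in> ball p e"
      by (cases p) (simp add: dist_Pair_Pair dist_commute)
    then show "f (s, snd p) = g (s, snd p)" using e assms(3) by blast
  qed (use e in auto)
  have 2: "eventually (\<lambda>s. f (fst p, s) = g (fst p, s)) (nhds (snd p))"
    unfolding eventually_nhds_metric
  proof (intro exI[of _ e] conjI allI impI)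
    fix s assume "dist s (snd p) < e"
    then have "(fst p, s) \<in> ball p e"
      by (cases p) (simp add: dist_Pair_Pair dist_commute)
    then show "f (fst p, s) = g (fst p, s)" using e assms(3) by blast
  qed (use e in auto)
  show ?thesis unfolding pd_def using deriv_cong_ev[OF 1 refl] deriv_cong_ev[OF 2 refl] by simp
qed

lemma diff_cong:
  assumes "open U" "p \<in> U" "\<And>x. x \<in> U \<Longrightarrow> f x = g x" "f differentiable (at p)"
  shows "g differentiable (at p)"
  using assms has_derivative_transform_within_open unfolding differentiable_def by blast


lemma Ck_diff: "Ck_on (Suc k) S f \<Longrightarrow> p \<in> S \<Longrightarrow> f differentiable (at p)"
  by simp

lemma Ck_mono: "Ck_on (Suc k) S f \<Longrightarrow> Ck_on k S f"
proof (induction k arbitrary: f)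
  case 0
  then have "\<forall>p\<in>S. f differentiable (at p)" by simp
  then have "\<forall>p\<in>S. isCont f p" using differentiable_imp_continuous_within by blast
  then show ?case by (simp add: continuous_at_imp_continuous_on)
next
  case (Suc k)
  then show ?case by (metis Ck_on.simps(2))
qed

lemma Ck_pd: "Ck_on (Suc k) S f \<Longrightarrow> Ck_on k S (pd i f)"
proof -
  assume a: "Ck_on (Suc k) S f"
  have "pd i f = pd 1 f \<or> pd i f = pd 2 f" by (cases "i = 1") (simp_all add: pd_def fun_eq_iff)
  then show ?thesis using a by (metis Ck_on.simps(2))
qed
lemma Ck_le0: "Ck_on (j + k) S f \<Longrightarrow> Ck_on j S f"
proof (induction k)
  case 0 then show ?case by simp
next
  case (Suc k)
  then show ?case using Ck_mono[of "j+k" S f] by simp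
qed

lemma Ck_le: "Ck_on k S f \<Longrightarrow> j \<le> k \<Longrightarrow> Ck_on j S f"
  using Ck_le0[of j "k - j" S f] by simp


lemma Ck_cong:
  assumes "open S" "\<And>x. x \<in> S \<Longrightarrow> f x = g x" "Ck_on k S f"
  shows "Ck_on k S g"
  using assms(2,3)
proof (induction k arbitrary: f g)
  case 0
  then show ?case using continuous_on_cong[of S S f g] by simp
next
  case (Suc k)
  have d: "\<forall>p\<in>S. g differentiable (at p)"
  proof
    fix p assume p: "p \<in> S"
    show "g differentiable (at p)"
      using diff_cong[OF assms(1) p, of f g] Suc.prems(1) Ck_diff[OF Suc.prems(2) p] by blast
  qed
  have "Ck_on k S (pd i g)" for i
  proof -
    have "\<And>x. x \<in> S \<Longrightarrow> pd i f x = pd i g x" using pd_cong[OF assms(1)] Suc.prems(1) by blast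
    then show ?thesis using Suc.IH[of "pd i f" "pd i g"] Ck_pd[OF Suc.prems(2)] by blast
  qed
  then show ?case using d by simp
qed


lemma Ck_cong':
  assumes "open S" "Ck_on k S f" "\<And>x. x \<in> S \<Longrightarrow> f x = g x"
  shows "Ck_on k S g"
  using Ck_cong[OF assms(1) assms(3) assms(2)] .

lemma Ck_const: "Ck_on k S (\<lambda>x. c)"
proof (induction k arbitrary: c)
  case 0 then show ?case by simp
next
  case (Suc k)
  have "pd i (\<lambda>x. c) = (\<lambda>x. 0)" for i by (rule ext) (simp add: pd_const)
  with Suc show ?case by simp
qed

lemma Ck_fst: "Ck_on k S fst"
proof (cases k)
  case 0 then show ?thesis by (simp add: continuous_on_fst)
next
  case (Suc j)
  have "pd 1 fst = (\<lambda>x. 1)" "pd 2 fst = (\<lambda>x. 0)" by (auto simp: pd_fst)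
  moreover have "\<forall>p\<in>S. fst differentiable (at p)"
    by (simp add: bounded_linear_imp_differentiable bounded_linear_fst)
  ultimately show ?thesis using Suc by (simp add: Ck_const)
qed

lemma Ck_snd: "Ck_on k S snd"
proof (cases k)
  case 0 then show ?thesis by (simp add: continuous_on_snd)
next
  case (Suc j)
  have "pd 1 snd = (\<lambda>x. 0)" "pd 2 snd = (\<lambda>x. 1)" by (auto simp: pd_snd)
  moreover have "\<forall>p\<in>S. snd differentiable (at p)"
    by (simp add: bounded_linear_imp_differentiable bounded_linear_snd)
  ultimately show ?thesis using Suc by (simp add: Ck_const)
qed

lemma Ck_add:
  assumes "open S" shows "Ck_on k S f \<Longrightarrow> Ck_on k S g \<Longrightarrow> Ck_on k S (\<lambda>x. f x + g x)"
proof (induction k arbitrary: f g)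
  case 0 then show ?case by (simp add: continuous_on_add)
next
  case (Suc k)
  have d1: "\<forall>p\<in>S. f differentiable at p" and d2: "\<forall>p\<in>S. g differentiable at p"
    using Suc.prems by simp_all
  have "Ck_on k S (pd i (\<lambda>x. f x + g x))" for i
  proof -
    have A: "Ck_on k S (\<lambda>x. pd i f x + pd i g x)" using Suc.IH[OF Ck_pd[OF Suc.prems(1)] Ck_pd[OF Suc.prems(2)]] .
    have B: "\<And>x. x \<in> S \<Longrightarrow> pd i f x + pd i g x = pd i (\<lambda>x. f x + g x) x"
      using d1 d2 by (simp add: pd_add)
    show ?thesis by (rule Ck_cong'[OF assms A B])
  qed
  moreover have "\<forall>p\<in>S. (\<lambda>x. f x + g x) differentiable (at p)"
    using d1 d2 by simp
  ultimately show ?case by (simp only: Ck_on.simps)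
qed

lemma Ck_mult:
  assumes "open S" shows "Ck_on k S f \<Longrightarrow> Ck_on k S g \<Longrightarrow> Ck_on k S (\<lambda>x. f x * g x)"
proof (induction k arbitrary: f g)
  case 0 then show ?case by (simp add: continuous_on_mult)
next
  case (Suc k)
  have d1: "\<forall>p\<in>S. f differentiable at p" and d2: "\<forall>p\<in>S. g differentiable at p"
    using Suc.prems by simp_all
  have "Ck_on k S (pd i (\<lambda>x. f x * g x))" for i
  proof -
    have A: "Ck_on k S (\<lambda>x. pd i f x * g x + f x * pd i g x)"
      using Ck_add[OF assms Suc.IH[OF Ck_pd[OF Suc.prems(1)] Ck_mono[OF Suc.prems(2)]]
                   Suc.IH[OF Ck_mono[OF Suc.prems(1)] Ck_pd[OF Suc.prems(2)]]] .
    have B: "\<And>x. x \<in> S \<Longrightarrow> pd i f x * g x + f x * pd i g x = pd i (\<lambda>x. f x * g x) x"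
      using d1 d2 by (simp add: pd_mult)
    show ?thesis by (rule Ck_cong'[OF assms A B])
  qed
  moreover have "\<forall>p\<in>S. (\<lambda>x. f x * g x) differentiable (at p)"
    using d1 d2 by simp
  ultimately show ?case by (simp only: Ck_on.simps)
qed

lemma Ck_comp2:
  assumes "open S"
  shows "Ck_on k U g \<Longrightarrow> Ck_on k S X1 \<Longrightarrow> Ck_on k S X2 \<Longrightarrow> (\<And>x. x \<in> S \<Longrightarrow> (X1 x, X2 x) \<in> U)
    \<Longrightarrow> Ck_on k S (\<lambda>x. g (X1 x, X2 x))"
proof (induction k arbitrary: g)
  case 0
  have "continuous_on S (\<lambda>x. (X1 x, X2 x))" using 0 by (simp add: continuous_on_Pair)
  moreover have "(\<lambda>x. (X1 x, X2 x)) ` S \<subseteq> U" using 0 by blast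
  ultimately show ?case using 0 continuous_on_compose2[of U g S "\<lambda>x. (X1 x, X2 x)"] by simp
next
  case (Suc k)
  have dg: "\<And>x. x \<in> S \<Longrightarrow> (\<lambda>x. g (X1 x, X2 x)) differentiable (at x)"
  proof -
    fix x assume x: "x \<in> S"
    have "(\<lambda>x. (X1 x, X2 x)) differentiable (at x)"
      using Suc.prems x by (simp add: differentiable_Pair)
    moreover have "g differentiable (at (X1 x, X2 x))" using Suc.prems x by simp
    ultimately show "(\<lambda>x. g (X1 x, X2 x)) differentiable (at x)"
      using differentiable_compose[of g "\<lambda>x. (X1 x, X2 x)"] by blast
  qed
  have "Ck_on k S (pd i (\<lambda>x. g (X1 x, X2 x)))" for i
  proof -
    have a: "Ck_on k S (\<lambda>x. pd 1 g (X1 x, X2 x))" "Ck_on k S (\<lambda>x. pd 2 g (X1 x, X2 x))"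
      using Suc.IH[OF Ck_pd[OF Suc.prems(1)] Ck_mono[OF Suc.prems(2)] Ck_mono[OF Suc.prems(3)] Suc.prems(4)] by blast+
    have b: "Ck_on k S (pd i X1)" "Ck_on k S (pd i X2)" using Suc.prems Ck_pd by blast+
    have A: "Ck_on k S (\<lambda>x. pd 1 g (X1 x, X2 x) * pd i X1 x + pd 2 g (X1 x, X2 x) * pd i X2 x)"
      by (rule Ck_add[OF assms Ck_mult[OF assms a(1) b(1)] Ck_mult[OF assms a(2) b(2)]])
    moreover have B: "\<And>x. x \<in> S \<Longrightarrow> pd 1 g (X1 x, X2 x) * pd i X1 x + pd 2 g (X1 x, X2 x) * pd i X2 x
       = pd i (\<lambda>x. g (X1 x, X2 x)) x"
    proof -
      fix x assume x: "x \<in> S"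
      show "pd 1 g (X1 x, X2 x) * pd i X1 x + pd 2 g (X1 x, X2 x) * pd i X2 x
       = pd i (\<lambda>x. g (X1 x, X2 x)) x"
        by (rule pd_comp2[symmetric]) (use Suc.prems x in auto)
    qed
    show ?thesis by (rule Ck_cong'[OF assms A B])
  qed
  then show ?case using dg by (simp only: Ck_on.simps) blast
qed

lemma sm1_deriv: "smooth1_on V \<phi> \<Longrightarrow> smooth1_on V (deriv \<phi>)"
  unfolding smooth1_on_def
proof (intro allI ballI)
  fix k x assume "\<forall>k. \<forall>x\<in>V. (deriv ^^ k) \<phi> differentiable at x" "x \<in> V"
  then have "(deriv ^^ Suc k) \<phi> differentiable at x" by blast
  then show "(deriv ^^ k) (deriv \<phi>) differentiable at x" by (simp add: funpow_Suc_right del: funpow.simps)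
qed

lemma sm1_diff: "smooth1_on V \<phi> \<Longrightarrow> x \<in> V \<Longrightarrow> (\<phi> has_real_derivative deriv \<phi> x) (at x)"
  unfolding smooth1_on_def by (metis DERIV_deriv_iff_real_differentiable funpow_0)

lemma Ck_comp1:
  assumes "open S"
  shows "smooth1_on V \<phi> \<Longrightarrow> Ck_on k S f \<Longrightarrow> (\<And>x. x \<in> S \<Longrightarrow> f x \<in> V) \<Longrightarrow> Ck_on k S (\<lambda>x. \<phi> (f x))"
proof (induction k arbitrary: \<phi>)
  case 0
  have "continuous_on V \<phi>"
    using 0 sm1_diff by (meson DERIV_isCont continuous_at_imp_continuous_on)
  moreover have "f ` S \<subseteq> V" using 0 by blast
  ultimately show ?case using 0 continuous_on_compose2[of V \<phi> S f] by simp
next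
  case (Suc k)
  have dg: "\<And>x. x \<in> S \<Longrightarrow> (\<lambda>x. \<phi> (f x)) differentiable (at x)"
  proof -
    fix x assume x: "x \<in> S"
    have "\<phi> differentiable (at (f x))" using sm1_diff[OF Suc.prems(1)] Suc.prems x
      real_differentiable_def by blast
    then show "(\<lambda>x. \<phi> (f x)) differentiable (at x)"
      using differentiable_compose[of \<phi> f] Suc.prems x by auto
  qed
  have "Ck_on k S (pd i (\<lambda>x. \<phi> (f x)))" for i
  proof -
    have A: "Ck_on k S (\<lambda>x. deriv \<phi> (f x) * pd i f x)"
      using Ck_mult[OF assms Suc.IH[OF sm1_deriv[OF Suc.prems(1)] Ck_mono[OF Suc.prems(2)] Suc.prems(3)] Ck_pd[OF Suc.prems(2)]] .
    moreover have B: "\<And>x. x \<in> S \<Longrightarrow> deriv \<phi> (f x) * pd i f x = pd i (\<lambda>x. \<phi> (f x)) x"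
    proof -
      fix x assume x: "x \<in> S"
      show "deriv \<phi> (f x) * pd i f x = pd i (\<lambda>x. \<phi> (f x)) x"
        by (rule pd_comp1[OF sm1_diff[OF Suc.prems(1) Suc.prems(3)[OF x]] Ck_diff[OF Suc.prems(2) x], symmetric])
    qed
    show ?thesis by (rule Ck_cong'[OF assms A B])
  qed
  then show ?case using dg by (simp only: Ck_on.simps) blast
qed


section \<open>1D smoothness\<close>

definition D1 :: "nat \<Rightarrow> real set \<Rightarrow> (real \<Rightarrow> real) \<Rightarrow> bool" where
  "D1 k V f \<longleftrightarrow> (\<forall>j\<le>k. \<forall>x\<in>V. (deriv ^^ j) f differentiable (at x))"

lemma funpow_deriv: "(deriv ^^ j) (deriv f) = (deriv ^^ Suc j) f"
  by (simp only: funpow_Suc_right comp_def)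

lemma D1_Suc: "D1 (Suc k) V f \<longleftrightarrow> (\<forall>x\<in>V. f differentiable (at x)) \<and> D1 k V (deriv f)"
proof
  assume a: "D1 (Suc k) V f"
  have "(\<forall>x\<in>V. f differentiable (at x))" using a unfolding D1_def
    using le0[of "Suc k"] funpow_0[of deriv f] by metis
  moreover have "D1 k V (deriv f)" unfolding D1_def
  proof (intro allI impI ballI)
    fix j x assume "j \<le> k" "x \<in> V"
    then have "Suc j \<le> Suc k" "x \<in> V" by simp_all
    then have "(deriv ^^ Suc j) f differentiable (at x)" using a unfolding D1_def by blast
    then show "(deriv ^^ j) (deriv f) differentiable at x" by (simp only: funpow_deriv)
  qed
  ultimately show "(\<forall>x\<in>V. f differentiable (at x)) \<and> D1 k V (deriv f)" by blast
next
  assume a: "(\<forall>x\<in>V. f differentiable (at x)) \<and> D1 k V (deriv f)"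
  show "D1 (Suc k) V f" unfolding D1_def
  proof (intro allI impI ballI)
    fix j x assume j: "j \<le> Suc k" and x: "x \<in> V"
    show "(deriv ^^ j) f differentiable at x"
    proof (cases j)
      case 0 then show ?thesis using a x by simp
    next
      case (Suc j')
      then have "(deriv ^^ j') (deriv f) differentiable at x" using a j x unfolding D1_def by simp
      then show ?thesis using Suc by (simp only: funpow_deriv)
    qed
  qed
qed

lemma D1_0: "D1 0 V f \<longleftrightarrow> (\<forall>x\<in>V. f differentiable (at x))"
  unfolding D1_def by simp

lemma smooth1_D1: "smooth1_on V f \<longleftrightarrow> (\<forall>k. D1 k V f)"
  unfolding smooth1_on_def D1_def by blast

lemma deriv_cong_open:
  fixes f g :: "real \<Rightarrow> real"
  assumes "open V" "x \<in> V" "\<And>y. y \<in> V \<Longrightarrow> f y = g y"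
  shows "deriv f x = deriv g x"
proof -
  have "eventually (\<lambda>y. f y = g y) (nhds x)"
    unfolding eventually_nhds using assms by blast
  then show ?thesis by (rule deriv_cong_ev) simp
qed

lemma D1_cong:
  assumes "open V" shows "D1 k V f \<Longrightarrow> (\<And>x. x \<in> V \<Longrightarrow> f x = g x) \<Longrightarrow> D1 k V g"
proof (induction k arbitrary: f g)
  case 0 then show ?case unfolding D1_0 using diff_cong[OF assms] by blast
next
  case (Suc k)
  have "\<forall>x\<in>V. g differentiable (at x)" using Suc.prems unfolding D1_Suc using diff_cong[OF assms] by blast
  moreover have "D1 k V (deriv g)"
    using Suc.IH[of "deriv f" "deriv g"] Suc.prems deriv_cong_open[OF assms] unfolding D1_Suc by blast
  ultimately show ?case unfolding D1_Suc by blast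
qed

lemma D1_deriv_eq: "(\<And>x. x \<in> V \<Longrightarrow> (f has_real_derivative f' x) (at x)) \<Longrightarrow> open V \<Longrightarrow> D1 k V f' \<Longrightarrow> D1 (Suc k) V f"
proof -
  assume d: "\<And>x. x \<in> V \<Longrightarrow> (f has_real_derivative f' x) (at x)" and V: "open V" and k: "D1 k V f'"
  have "\<And>x. x \<in> V \<Longrightarrow> f' x = deriv f x"
  proof -
    fix x assume "x \<in> V" then show "f' x = deriv f x" using DERIV_imp_deriv[OF d] by simp
  qed
  then have "D1 k V (deriv f)" using D1_cong[OF V k] by blast
  moreover have "\<forall>x\<in>V. f differentiable (at x)" using d real_differentiable_def by blast
  ultimately show ?thesis unfolding D1_Suc by blast
qed

lemma D1_mono: "D1 (Suc k) V f \<Longrightarrow> D1 k V f"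
  unfolding D1_def by simp

lemma D1_const: "D1 k V (\<lambda>x. c)"
  unfolding D1_def
proof (intro allI impI ballI)
  fix j x
  show "(deriv ^^ j) (\<lambda>x. c) differentiable at x"
  proof (cases j)
    case 0 then show ?thesis by simp
  next
    case (Suc j')
    have z: "(deriv ^^ j') (\<lambda>x. 0::real) = (\<lambda>x. 0)" by (induction j') auto
    have "deriv (\<lambda>x. c) = (\<lambda>x. 0::real)" by (rule ext) simp
    then have "(deriv ^^ j) (\<lambda>x. c) = (\<lambda>x. 0)" using Suc z by (simp only: funpow_deriv[symmetric])
    then show ?thesis by simp
  qed
qed

lemma D1_add: assumes "open V" shows "D1 k V f \<Longrightarrow> D1 k V g \<Longrightarrow> D1 k V (\<lambda>x. f x + g x)"
proof (induction k arbitrary: f g)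
  case 0 then show ?case unfolding D1_0 by simp
next
  case (Suc k)
  have fd: "\<And>x. x \<in> V \<Longrightarrow> (f has_real_derivative deriv f x) (at x)"
   and gd: "\<And>x. x \<in> V \<Longrightarrow> (g has_real_derivative deriv g x) (at x)"
    using Suc.prems unfolding D1_Suc by (simp_all add: DERIV_deriv_iff_real_differentiable)
  show ?case
  proof (rule D1_deriv_eq[OF _ assms])
    show "\<And>x. x \<in> V \<Longrightarrow> ((\<lambda>x. f x + g x) has_real_derivative deriv f x + deriv g x) (at x)"
      using fd gd by (simp add: Deriv.field_differentiable_add)
    show "D1 k V (\<lambda>x. deriv f x + deriv g x)" using Suc.IH Suc.prems unfolding D1_Suc by blast
  qed
qed

lemma D1_mult: assumes "open V" shows "D1 k V f \<Longrightarrow> D1 k V g \<Longrightarrow> D1 k V (\<lambda>x. f x * g x)"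
proof (induction k arbitrary: f g)
  case 0 then show ?case unfolding D1_0 by simp
next
  case (Suc k)
  have fd: "\<And>x. x \<in> V \<Longrightarrow> (f has_real_derivative deriv f x) (at x)"
   and gd: "\<And>x. x \<in> V \<Longrightarrow> (g has_real_derivative deriv g x) (at x)"
    using Suc.prems unfolding D1_Suc by (simp_all add: DERIV_deriv_iff_real_differentiable)
  show ?case
  proof (rule D1_deriv_eq[OF _ assms])
    show "\<And>x. x \<in> V \<Longrightarrow> ((\<lambda>x. f x * g x) has_real_derivative deriv f x * g x + f x * deriv g x) (at x)"
    proof -
      fix x assume x: "x \<in> V"
      show "((\<lambda>x. f x * g x) has_real_derivative deriv f x * g x + f x * deriv g x) (at x)"
        using DERIV_mult'[OF fd[OF x] gd[OF x]] by (simp add: add.commute)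
    qed
    have a: "D1 k V (deriv f)" "D1 k V (deriv g)" "D1 k V f" "D1 k V g"
      using Suc.prems D1_mono unfolding D1_Suc by blast+
    show "D1 k V (\<lambda>x. deriv f x * g x + f x * deriv g x)"
      by (rule D1_add[OF assms Suc.IH[OF a(1) a(4)] Suc.IH[OF a(3) a(2)]])
  qed
qed

lemma D1_comp: assumes "open W"
  shows "smooth1_on V \<phi> \<Longrightarrow> D1 k W f \<Longrightarrow> (\<And>x. x \<in> W \<Longrightarrow> f x \<in> V) \<Longrightarrow> D1 k W (\<lambda>x. \<phi> (f x))"
proof (induction k arbitrary: \<phi>)
  case 0
  show ?case unfolding D1_0
  proof
    fix x assume x: "x \<in> W"
    have "\<phi> differentiable (at (f x))" using sm1_diff[OF 0(1) 0(3)[OF x]] real_differentiable_def by blast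
    moreover have "f differentiable (at x)" using 0(2) x unfolding D1_0 by blast
    ultimately show "(\<lambda>x. \<phi> (f x)) differentiable at x" using differentiable_compose by blast
  qed
next
  case (Suc k)
  have fd: "\<And>x. x \<in> W \<Longrightarrow> (f has_real_derivative deriv f x) (at x)"
    using Suc.prems unfolding D1_Suc by (simp_all add: DERIV_deriv_iff_real_differentiable)
  show ?case
  proof (rule D1_deriv_eq[OF _ assms])
    show "\<And>x. x \<in> W \<Longrightarrow> ((\<lambda>x. \<phi> (f x)) has_real_derivative deriv \<phi> (f x) * deriv f x) (at x)"
    proof -
      fix x assume x: "x \<in> W"
      show "((\<lambda>x. \<phi> (f x)) has_real_derivative deriv \<phi> (f x) * deriv f x) (at x)"
        by (rule DERIV_chain2[OF sm1_diff[OF Suc.prems(1) Suc.prems(3)[OF x]] fd[OF x]])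
    qed
    have a: "D1 k W (deriv f)" "D1 k W f"
      using Suc.prems D1_mono unfolding D1_Suc by blast+
    show "D1 k W (\<lambda>x. deriv \<phi> (f x) * deriv f x)"
      by (rule D1_mult[OF assms Suc.IH[OF sm1_deriv[OF Suc.prems(1)] a(2) Suc.prems(3)] a(1)])
  qed
qed

lemma D1_id: "D1 k V (\<lambda>x. x)"
  unfolding D1_def
proof (intro allI impI ballI)
  fix j x
  show "(deriv ^^ j) (\<lambda>x. x) differentiable at (x::real)"
  proof (cases j)
    case 0 then show ?thesis by simp
  next
    case (Suc j')
    have "deriv (\<lambda>x. x::real) = (\<lambda>x. 1)" by (rule ext) simp
    moreover have "(deriv ^^ j') (\<lambda>x. 1::real) differentiable at x"
      using D1_const[of j' UNIV 1] unfolding D1_def by simp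
    ultimately show ?thesis using Suc by (simp only: funpow_deriv[symmetric])
  qed
qed

lemma inv_deriv: "x \<noteq> 0 \<Longrightarrow> (inverse has_real_derivative (-1) * inverse x * inverse x) (at (x::real))"
  using DERIV_inverse[of x UNIV] by (simp add: power2_eq_square)

lemma D1_inverse: "D1 k {0<..} (inverse :: real \<Rightarrow> real)"
proof (induction k)
  case 0
  have "\<forall>x\<in>{0<..}. (inverse::real\<Rightarrow>real) differentiable (at x)"
    using inv_deriv real_differentiable_def by fastforce
  then show ?case unfolding D1_0 .
next
  case (Suc k)
  have o: "open ({0<..}::real set)" by simp
  show ?case
  proof (rule D1_deriv_eq[of _ _ "\<lambda>x. (-1) * inverse x * inverse x", OF _ o])
    show "\<And>x. x \<in> {0<..} \<Longrightarrow> (inverse has_real_derivative (-1) * inverse x * inverse x) (at x)"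
      using inv_deriv by simp
    show "D1 k {0<..} (\<lambda>x. (-1) * inverse x * inverse x)"
      by (rule D1_mult[OF o D1_mult[OF o D1_const Suc.IH] Suc.IH])
  qed
qed

lemma smooth1_inverse: "smooth1_on {0<..} (inverse :: real \<Rightarrow> real)"
  using D1_inverse smooth1_D1 by blast

lemma psi_star_smooth:
  assumes "smooth1_on {0<..} \<psi>" shows "smooth1_on {0<..} (psi_star \<psi>)"
proof -
  have "D1 k {0<..} (\<lambda>t. t * \<psi> (inverse t))" for k
  proof (rule D1_mult[OF _ D1_id D1_comp[OF _ assms D1_inverse]])
    show "open ({0<..}::real set)" by simp
    show "open ({0<..}::real set)" by simp
    show "\<And>x::real. x \<in> {0<..} \<Longrightarrow> inverse x \<in> {0<..}" by simp
  qed
  then show ?thesis unfolding smooth1_D1 psi_star_def[abs_def] by blast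
qed


lemma psi_star_convex:
  assumes "strict_convex_on {0<..} \<psi>" shows "strict_convex_on {0<..} (psi_star \<psi>)"
  unfolding strict_convex_on_def
proof (intro conjI ballI allI impI)
  show "convex ({0<..}::real set)" by (simp add: convex_real_interval)
  fix x y :: real and t :: real
  assume x: "x \<in> {0<..}" and y: "y \<in> {0<..}" and xy: "x \<noteq> y" and t0: "0 < t" and t1: "t < 1"
  define r where "r = (1 - t) * x + t * y"
  have xp: "x > 0" and yp: "y > 0" using x y by auto
  have rp: "r > 0" unfolding r_def using xp yp t0 t1 by (simp add: add_pos_pos)
  define b where "b = t * y / r"
  have b0: "0 < b" unfolding b_def using t0 yp rp by simp
  have b1: "b < 1" unfolding b_def using t1 xp rp by (simp add: r_def field_simps)
  have ib: "1 - b = (1 - t) * x / r" unfolding b_def using rp by (simp add: r_def field_simps)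
  have "(1 - b) * inverse x + b * inverse y = ((1 - t) * x / r) * inverse x + (t * y / r) * inverse y"
    by (subst ib) (simp add: b_def)
  also have "\<dots> = ((1 - t) + t) / r" using xp yp rp by (simp add: field_simps)
  also have "\<dots> = inverse r" by (simp add: divide_inverse)
  finally have ir: "inverse r = (1 - b) * inverse x + b * inverse y" by simp
  have ne: "inverse x \<noteq> inverse y" using xy by simp
  have "\<psi> ((1 - b) *\<^sub>R inverse x + b *\<^sub>R inverse y) < (1 - b) * \<psi> (inverse x) + b * \<psi> (inverse y)"
    using assms ne b0 b1 xp yp unfolding strict_convex_on_def by simp
  then have "\<psi> (inverse r) < (1 - b) * \<psi> (inverse x) + b * \<psi> (inverse y)" using ir by simp
  then have "r * \<psi> (inverse r) < r * ((1 - b) * \<psi> (inverse x) + b * \<psi> (inverse y))"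
    using rp by simp
  also have "\<dots> = (1 - t) * (x * \<psi> (inverse x)) + t * (y * \<psi> (inverse y))"
    using rp by (subst ib) (simp add: b_def field_simps)
  finally show "psi_star \<psi> ((1 - t) *\<^sub>R x + t *\<^sub>R y) < (1 - t) * psi_star \<psi> x + t * psi_star \<psi> y"
    unfolding psi_star_def r_def by simp
qed

lemma psi_star_deriv:
  assumes "smooth1_on {0<..} \<psi>" "t > 0"
  shows "deriv (psi_star \<psi>) t = \<psi> (inverse t) - deriv \<psi> (inverse t) * inverse t"
proof -
  have d: "(\<psi> has_real_derivative deriv \<psi> (inverse t)) (at (inverse t))"
    using sm1_diff[OF assms(1)] assms(2) by simp
  have "((\<lambda>t. t * \<psi> (inverse t)) has_real_derivative
      t * (deriv \<psi> (inverse t) * ((-1) * inverse t * inverse t)) + 1 * \<psi> (inverse t)) (at t)"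
    by (rule DERIV_mult'[OF DERIV_ident DERIV_chain2[OF d inv_deriv]]) (use assms in simp)
  then have "(psi_star \<psi> has_real_derivative \<psi> (inverse t) - deriv \<psi> (inverse t) * inverse t) (at t)"
    unfolding psi_star_def[abs_def] using assms(2) by (simp add: field_simps)
  then show ?thesis by (rule DERIV_imp_deriv)
qed


lemma dist_pair_le: "dist (s::real, y::real) (a, b) \<le> dist s a + dist y b"
  unfolding dist_Pair_Pair by (rule sqrt_sum_squares_le_sum) simp_all

lemma box_in_ball:
  assumes "a \<le> s" "s \<le> a + t" "b \<le> y" "y \<le> b + t" "3 * t = d" "d > 0"
  shows "(s, y) \<in> ball (a, b) d"
proof -
  have "dist (s, y) (a, b) \<le> dist s a + dist y b" by (rule dist_pair_le)
  also have "\<dots> \<le> t + t" using assms by (simp add: dist_real_def)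
  also have "\<dots> < d" using assms by simp
  finally show ?thesis by (simp add: dist_commute)
qed

lemma schwarz:
  assumes U: "open U" and p: "p \<in> U"
    and df: "\<And>q. q \<in> U \<Longrightarrow> f differentiable (at q)"
    and d1: "\<And>q. q \<in> U \<Longrightarrow> pd 1 f differentiable (at q)"
    and d2: "\<And>q. q \<in> U \<Longrightarrow> pd 2 f differentiable (at q)"
    and c1: "continuous_on U (pd 2 (pd 1 f))"
    and c2: "continuous_on U (pd 1 (pd 2 f))"
  shows "pd 1 (pd 2 f) p = pd 2 (pd 1 f) p"
proof (rule ccontr)
  obtain a b where pab: "p = (a, b)" by (cases p)
  define A where "A = pd 2 (pd 1 f) p"
  define B where "B = pd 1 (pd 2 f) p"
  assume "pd 1 (pd 2 f) p \<noteq> pd 2 (pd 1 f) p"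
  then have "A \<noteq> B" unfolding A_def B_def by simp
  define d where "d = \<bar>A - B\<bar> / 2"
  have d0: "d > 0" using \<open>A \<noteq> B\<close> unfolding d_def by simp
  obtain e where e: "e > 0" "ball p e \<subseteq> U" using U p openE by blast
  have ic1: "isCont (pd 2 (pd 1 f)) p" using c1 U p continuous_on_eq_continuous_at by blast
  have ic2: "isCont (pd 1 (pd 2 f)) p" using c2 U p continuous_on_eq_continuous_at by blast
  obtain r1 where r1: "r1 > 0" "\<And>q. dist q p < r1 \<Longrightarrow> dist (pd 2 (pd 1 f) q) A < d"
    using ic1 d0 unfolding continuous_at_eps_delta A_def by blast
  obtain r2 where r2: "r2 > 0" "\<And>q. dist q p < r2 \<Longrightarrow> dist (pd 1 (pd 2 f) q) B < d"
    using ic2 d0 unfolding continuous_at_eps_delta B_def by blast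
  define \<delta> where "\<delta> = min e (min r1 r2)"
  have \<delta>0: "\<delta> > 0" unfolding \<delta>_def using e r1 r2 by simp
  define t where "t = \<delta> / 3"
  have t0: "t > 0" unfolding t_def using \<delta>0 by simp
  have inU: "(s, y) \<in> U" and near1: "dist (s,y) p < r1" and near2: "dist (s,y) p < r2"
    if "a \<le> s" "s \<le> a + t" "b \<le> y" "y \<le> b + t" for s y
  proof -
    have "(s, y) \<in> ball (a, b) \<delta>" by (rule box_in_ball[OF that]) (use \<delta>0 t_def in simp_all)
    then have "dist (s,y) p < \<delta>" using pab by (simp add: dist_commute)
    then show "(s, y) \<in> U" "dist (s,y) p < r1" "dist (s,y) p < r2"
      using e unfolding \<delta>_def by (auto simp: dist_commute)
  qed
  define \<Delta> where "\<Delta> = f (a + t, b + t) - f (a + t, b) - f (a, b + t) + f (a, b)"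
  obtain s1 where s1: "a < s1" "s1 < a + t"
    and e1: "(\<lambda>s. f (s, b + t) - f (s, b)) (a + t) - (\<lambda>s. f (s, b + t) - f (s, b)) a
             = t * (pd 1 f (s1, b + t) - pd 1 f (s1, b))"
  proof -
    have "\<exists>z. a < z \<and> z < a + t \<and> (\<lambda>s. f (s, b + t) - f (s, b)) (a + t) - (\<lambda>s. f (s, b + t) - f (s, b)) a
       = (a + t - a) * (pd 1 f (z, b + t) - pd 1 f (z, b))"
    proof (rule MVT2)
      show "a < a + t" using t0 by simp
      fix s assume "a \<le> s" "s \<le> a + t"
      then have "(s, b + t) \<in> U" "(s, b) \<in> U" using inU t0 by simp_all
      then show "((\<lambda>s. f (s, b + t) - f (s, b)) has_real_derivative pd 1 f (s, b + t) - pd 1 f (s, b)) (at s)"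
        using pd_sec1[OF df] by (intro DERIV_diff) simp_all
    qed
    then show ?thesis using that by auto
  qed
  obtain y1 where y1: "b < y1" "y1 < b + t"
    and e1': "pd 1 f (s1, b + t) - pd 1 f (s1, b) = t * pd 2 (pd 1 f) (s1, y1)"
  proof -
    have "\<exists>z. b < z \<and> z < b + t \<and> (\<lambda>y. pd 1 f (s1, y)) (b + t) - (\<lambda>y. pd 1 f (s1, y)) b
       = (b + t - b) * pd 2 (pd 1 f) (s1, z)"
    proof (rule MVT2)
      show "b < b + t" using t0 by simp
      fix y assume "b \<le> y" "y \<le> b + t"
      then have "(s1, y) \<in> U" using inU s1 by simp
      then show "((\<lambda>y. pd 1 f (s1, y)) has_real_derivative pd 2 (pd 1 f) (s1, y)) (at y)"
        using pd_sec2[OF d1] by simp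
    qed
    then show ?thesis using that by auto
  qed
  obtain y2 where y2: "b < y2" "y2 < b + t"
    and e2: "(\<lambda>y. f (a + t, y) - f (a, y)) (b + t) - (\<lambda>y. f (a + t, y) - f (a, y)) b
             = t * (pd 2 f (a + t, y2) - pd 2 f (a, y2))"
  proof -
    have "\<exists>z. b < z \<and> z < b + t \<and> (\<lambda>y. f (a + t, y) - f (a, y)) (b + t) - (\<lambda>y. f (a + t, y) - f (a, y)) b
       = (b + t - b) * (pd 2 f (a + t, z) - pd 2 f (a, z))"
    proof (rule MVT2)
      show "b < b + t" using t0 by simp
      fix y assume "b \<le> y" "y \<le> b + t"
      then have "(a + t, y) \<in> U" "(a, y) \<in> U" using inU t0 by simp_all
      then show "((\<lambda>y. f (a + t, y) - f (a, y)) has_real_derivative pd 2 f (a + t, y) - pd 2 f (a, y)) (at y)"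
        using pd_sec2[OF df] by (intro DERIV_diff) simp_all
    qed
    then show ?thesis using that by auto
  qed
  obtain s2 where s2: "a < s2" "s2 < a + t"
    and e2': "pd 2 f (a + t, y2) - pd 2 f (a, y2) = t * pd 1 (pd 2 f) (s2, y2)"
  proof -
    have "\<exists>z. a < z \<and> z < a + t \<and> (\<lambda>s. pd 2 f (s, y2)) (a + t) - (\<lambda>s. pd 2 f (s, y2)) a
       = (a + t - a) * pd 1 (pd 2 f) (z, y2)"
    proof (rule MVT2)
      show "a < a + t" using t0 by simp
      fix s assume "a \<le> s" "s \<le> a + t"
      then have "(s, y2) \<in> U" using inU y2 by simp
      then show "((\<lambda>s. pd 2 f (s, y2)) has_real_derivative pd 1 (pd 2 f) (s, y2)) (at s)"
        using pd_sec1[OF d2] by simp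
    qed
    then show ?thesis using that by auto
  qed
  have "\<Delta> = t * (t * pd 2 (pd 1 f) (s1, y1))" using e1 e1' unfolding \<Delta>_def by simp
  moreover have "\<Delta> = t * (t * pd 1 (pd 2 f) (s2, y2))" using e2 e2' unfolding \<Delta>_def by simp
  ultimately have eq: "pd 2 (pd 1 f) (s1, y1) = pd 1 (pd 2 f) (s2, y2)" using t0 by simp
  have "dist (pd 2 (pd 1 f) (s1, y1)) A < d" using r1(2) near1 s1 y1 by simp
  moreover have "dist (pd 1 (pd 2 f) (s2, y2)) B < d" using r2(2) near2 s2 y2 by simp
  ultimately have "\<bar>A - B\<bar> < 2 * d" using eq by (simp add: dist_real_def)
  then show False unfolding d_def by simp
qed


declare One_nat_def [simp del]

lemma sm2_Ck: "smooth2_on S f \<Longrightarrow> Ck_on k S f"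
  unfolding smooth2_on_def by blast

lemma sm2_pd: "smooth2_on S f \<Longrightarrow> smooth2_on S (pd i f)"
  unfolding smooth2_on_def using Ck_pd by blast

lemma sm2_diff: "smooth2_on S f \<Longrightarrow> p \<in> S \<Longrightarrow> f differentiable (at p)"
  using Ck_diff[OF sm2_Ck[of S f "Suc 0"]] by blast

lemma sm2_cont: "smooth2_on S f \<Longrightarrow> continuous_on S f"
  using sm2_Ck[of S f 0] by simp

lemma sm2_cong: "open S \<Longrightarrow> smooth2_on S f \<Longrightarrow> (\<And>x. x \<in> S \<Longrightarrow> f x = g x) \<Longrightarrow> smooth2_on S g"
  unfolding smooth2_on_def using Ck_cong' by blast

lemma sm2_add: "open S \<Longrightarrow> smooth2_on S f \<Longrightarrow> smooth2_on S g \<Longrightarrow> smooth2_on S (\<lambda>x. f x + g x)"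
  unfolding smooth2_on_def using Ck_add by blast

lemma sm2_mult: "open S \<Longrightarrow> smooth2_on S f \<Longrightarrow> smooth2_on S g \<Longrightarrow> smooth2_on S (\<lambda>x. f x * g x)"
  unfolding smooth2_on_def using Ck_mult by blast

lemma sm2_const: "smooth2_on S (\<lambda>x. c)"
  unfolding smooth2_on_def using Ck_const by blast

lemma sm2_neg: "open S \<Longrightarrow> smooth2_on S f \<Longrightarrow> smooth2_on S (\<lambda>x. - f x)"
  using sm2_mult[OF _ sm2_const[of S "-1"], of f] by simp

lemma sm2_sub: "open S \<Longrightarrow> smooth2_on S f \<Longrightarrow> smooth2_on S g \<Longrightarrow> smooth2_on S (\<lambda>x. f x - g x)"
  using sm2_add[OF _ _ sm2_neg, of S f g] by simp

lemma sm2_comp1: "open S \<Longrightarrow> smooth1_on V \<phi> \<Longrightarrow> smooth2_on S f \<Longrightarrow> (\<And>x. x \<in> S \<Longrightarrow> f x \<in> V)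
   \<Longrightarrow> smooth2_on S (\<lambda>x. \<phi> (f x))"
  unfolding smooth2_on_def using Ck_comp1 by blast

lemma sm2_inverse: "open S \<Longrightarrow> smooth2_on S f \<Longrightarrow> (\<And>x. x \<in> S \<Longrightarrow> f x > 0)
   \<Longrightarrow> smooth2_on S (\<lambda>x. inverse (f x))"
  using sm2_comp1[OF _ smooth1_inverse] by simp

lemma sm2_schwarz:
  assumes "open S" "smooth2_on S f" "p \<in> S"
  shows "pd 1 (pd 2 f) p = pd 2 (pd 1 f) p"
proof (rule schwarz[OF assms(1,3)])
  show "\<And>q. q \<in> S \<Longrightarrow> f differentiable at q" using sm2_diff[OF assms(2)] .
  show "\<And>q. q \<in> S \<Longrightarrow> pd 1 f differentiable at q" using sm2_diff[OF sm2_pd[OF assms(2)]] .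
  show "\<And>q. q \<in> S \<Longrightarrow> pd 2 f differentiable at q" using sm2_diff[OF sm2_pd[OF assms(2)]] .
  show "continuous_on S (pd 2 (pd 1 f))" using sm2_cont[OF sm2_pd[OF sm2_pd[OF assms(2)]]] .
  show "continuous_on S (pd 1 (pd 2 f))" using sm2_cont[OF sm2_pd[OF sm2_pd[OF assms(2)]]] .
qed

lemma pd_sym:
  assumes "open S" "smooth2_on S f" "p \<in> S"
  shows "pd i (pd j f) p = pd j (pd i f) p"
proof -
  have "pd i f = pd 1 f \<or> pd i f = pd 2 f" "pd j f = pd 1 f \<or> pd j f = pd 2 f"
    by (cases "i = 1"; simp add: pd_def fun_eq_iff)+
  moreover have "pd i g = pd 1 g \<or> pd i g = pd 2 g" "pd j g = pd 1 g \<or> pd j g = pd 2 g" for g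
    by (cases "i = 1"; simp add: pd_def fun_eq_iff)+
  ultimately show ?thesis using sm2_schwarz[OF assms]
    by (cases "i = 1"; cases "j = 1"; simp add: pd_def fun_eq_iff) 
qed


declare One_nat_def [simp del]

lemma hess_sm2: "smooth2_on S u \<Longrightarrow> smooth2_on S (hess u i j)"
proof -
  assume "smooth2_on S u"
  then have "smooth2_on S (pd i (pd j u))" using sm2_pd by blast
  moreover have "hess u i j = pd i (pd j u)" by (rule ext) (simp add: hess_def)
  ultimately show ?thesis by simp
qed

lemma grad_deriv:
  assumes "smooth2_on S u" "x \<in> S"
  shows "(grad u has_derivative (\<lambda>h. (hess u 1 1 x * fst h + hess u 2 1 x * snd h,
            hess u 1 2 x * fst h + hess u 2 2 x * snd h))) (at x)"
proof -
  have g: "grad u = (\<lambda>x. (pd 1 u x, pd 2 u x))" by (rule ext) (simp add: grad_def)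
  have d1: "pd 1 u differentiable (at x)" and d2: "pd 2 u differentiable (at x)"
    using sm2_diff[OF sm2_pd[OF assms(1)] assms(2)] by blast+
  show ?thesis unfolding g hess_def
    by (rule has_derivative_Pair[OF frechet[OF d1] frechet[OF d2]])
qed

lemma local_inverse:
  assumes U: "open \<Omega>" and us: "smooth2_on \<Omega> u" and J: "\<forall>p\<in>\<Omega>. hessdet u p \<noteq> 0" and x0: "x0 \<in> \<Omega>"
  obtains V g where "open V" "grad u x0 \<in> V" "\<And>y. y \<in> V \<Longrightarrow> g y \<in> \<Omega>" "g (grad u x0) = x0"
    "\<And>y. y \<in> V \<Longrightarrow> grad u (g y) = y" "\<And>y. y \<in> V \<Longrightarrow> g differentiable (at y)"
proof -
  define L where "L x = (\<lambda>h::real\<times>real. (hess u 1 1 x * fst h + hess u 2 1 x * snd h,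
            hess u 1 2 x * fst h + hess u 2 2 x * snd h))" for x
  define M where "M x = Blinfun (L x)" for x
  have bl: "bounded_linear (L x)" for x
    unfolding L_def by (intro bounded_linear_intros)
  have MA: "blinfun_apply (M x) = L x" for x unfolding M_def using bl by (simp add: bounded_linear_Blinfun_apply)
  have der: "\<And>x. x \<in> \<Omega> \<Longrightarrow> (grad u has_derivative blinfun_apply (M x)) (at x)"
    unfolding MA L_def using grad_deriv[OF us] by blast
  have ch: "continuous_on \<Omega> (hess u i j)" for i j using sm2_cont[OF hess_sm2[OF us]] .
  have cont: "continuous_on \<Omega> M"
  proof (rule continuous_on_blinfun_componentwise)
    fix i :: "real \<times> real" assume "i \<in> Basis"
    show "continuous_on \<Omega> (\<lambda>x. blinfun_apply (M x) i)"
      unfolding MA L_def by (intro continuous_intros ch)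
  qed
  define a where "a = hess u 1 1 x0"
  define b where "b = hess u 1 2 x0"
  define c where "c = hess u 2 1 x0"
  define d where "d = hess u 2 2 x0"
  define D where "D = hessdet u x0"
  have D: "D \<noteq> 0" "D = a * d - b * c" using J x0 unfolding D_def a_def b_def c_def d_def hessdet_def by auto
  define Li where "Li = (\<lambda>k::real\<times>real. (inverse D * (d * fst k - c * snd k), inverse D * (a * snd k - b * fst k)))"
  have bli: "bounded_linear Li" unfolding Li_def by (intro bounded_linear_intros)
  have inv: "Blinfun Li o\<^sub>L M x0 = id_blinfun"
  proof (rule blinfun_eqI)
    fix h :: "real \<times> real"
    obtain h1 h2 where h: "h = (h1, h2)" by (cases h)
    have e1: "d * (a * h1 + c * h2) - c * (b * h1 + d * h2) = D * h1" unfolding D(2) by (simp add: algebra_simps)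
    have e2: "a * (b * h1 + d * h2) - b * (a * h1 + c * h2) = D * h2" unfolding D(2) by (simp add: algebra_simps)
    have "Li (L x0 h) = h"
      unfolding Li_def L_def a_def[symmetric] b_def[symmetric] c_def[symmetric] d_def[symmetric] h
      using D(1) by (simp add: e1 e2)
    then show "blinfun_apply (Blinfun Li o\<^sub>L M x0) h = blinfun_apply id_blinfun h"
      by (simp add: MA bounded_linear_Blinfun_apply[OF bli])
  qed
  show ?thesis
  proof (rule inverse_function_theorem[OF U der cont x0 inv])
    fix U' V g g'
    assume UV: "open U'" "U' \<subseteq> \<Omega>" "x0 \<in> U'" "open V" "grad u x0 \<in> V"
      "homeomorphism U' V (grad u) g"
      and gd: "\<And>y. y \<in> V \<Longrightarrow> (g has_derivative (g' y)) (at y)"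
    show ?thesis
    proof (rule that[of V g])
      show "open V" "grad u x0 \<in> V" by (fact UV)+
      show "\<And>y. y \<in> V \<Longrightarrow> g y \<in> \<Omega>" using UV unfolding homeomorphism_def by blast
      show "g (grad u x0) = x0" using UV unfolding homeomorphism_def by blast
      show "\<And>y. y \<in> V \<Longrightarrow> grad u (g y) = y" using UV unfolding homeomorphism_def by blast
      show "\<And>y. y \<in> V \<Longrightarrow> g differentiable (at y)" using gd differentiable_def by blast
    qed
  qed
qed


declare One_nat_def [simp del]

definition cof :: "(real \<times> real \<Rightarrow> real) \<Rightarrow> nat \<Rightarrow> nat \<Rightarrow> real \<times> real \<Rightarrow> real" where
  "cof u l i = (if l = 1 \<and> i = 1 then hess u 2 2 else if l = 2 \<and> i = 2 then hess u 1 1 else (\<lambda>p. - hess u l i p))"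

lemma hessinv_alt: "hessinv u l i p = cof u l i p * inverse (hessdet u p)"
  unfolding hessinv_def cof_def by (simp add: divide_inverse)

lemma cof_sm2: "open S \<Longrightarrow> smooth2_on S u \<Longrightarrow> smooth2_on S (cof u l i)"
  unfolding cof_def using hess_sm2 sm2_neg[OF _ hess_sm2] by simp

lemma hessinv_sm2:
  assumes "open S" "smooth2_on S u" "\<forall>p\<in>S. hessdet u p > 0"
  shows "smooth2_on S (hessinv u l i)"
proof -
  have hd: "hessdet u = (\<lambda>p. hess u 1 1 p * hess u 2 2 p - hess u 1 2 p * hess u 2 1 p)"
    by (rule ext) (simp add: hessdet_def)
  have J: "smooth2_on S (hessdet u)" unfolding hd
    by (intro sm2_sub sm2_mult hess_sm2 assms(1,2))
  have iJ: "smooth2_on S (\<lambda>p. inverse (hessdet u p))" using sm2_inverse[OF assms(1) J] assms(3) by blast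
  have c: "smooth2_on S (cof u l i)" by (rule cof_sm2[OF assms(1,2)])
  have "hessinv u l i = (\<lambda>p. cof u l i p * inverse (hessdet u p))" by (rule ext) (rule hessinv_alt)
  then show ?thesis using sm2_mult[OF assms(1) c iJ] by simp
qed

lemma hessdet_sm2:
  assumes "open S" "smooth2_on S u"
  shows "smooth2_on S (hessdet u)"
proof -
  have hd: "hessdet u = (\<lambda>p. hess u 1 1 p * hess u 2 2 p - hess u 1 2 p * hess u 2 1 p)"
    by (rule ext) (simp add: hessdet_def)
  show ?thesis unfolding hd by (intro sm2_sub sm2_mult hess_sm2 assms(1,2))
qed

locale LT =
  fixes \<Omega> u V g
  assumes \<Omega>_open: "open \<Omega>" and us: "smooth2_on \<Omega> u" and Jpos: "\<forall>p\<in>\<Omega>. hessdet u p > 0"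
    and V_open: "open V" and g\<Omega>: "\<And>y. y \<in> V \<Longrightarrow> g y \<in> \<Omega>"
    and ginv: "\<And>y. y \<in> V \<Longrightarrow> grad u (g y) = y"
    and gdiff: "\<And>y. y \<in> V \<Longrightarrow> g differentiable (at y)"
begin

definition "g1 y = fst (g y)"
definition "g2 y = snd (g y)"

lemma gsplit: "(g1 y, g2 y) = g y" by (simp add: g1_def g2_def)

lemma g1d: "y \<in> V \<Longrightarrow> g1 differentiable (at y)"
proof -
  assume y: "y \<in> V"
  have "fst differentiable (at (g y))" by (simp add: bounded_linear_fst bounded_linear_imp_differentiable)
  then show ?thesis unfolding g1_def[abs_def] using differentiable_compose[of fst g y UNIV] gdiff[OF y] by simp
qed

lemma g2d: "y \<in> V \<Longrightarrow> g2 differentiable (at y)"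
proof -
  assume y: "y \<in> V"
  have "snd differentiable (at (g y))" by (simp add: bounded_linear_snd bounded_linear_imp_differentiable)
  then show ?thesis unfolding g2_def[abs_def] using differentiable_compose[of snd g y UNIV] gdiff[OF y] by simp
qed

lemma gin: "y \<in> V \<Longrightarrow> (g1 y, g2 y) \<in> \<Omega>" using g\<Omega>[of y] by (simp only: gsplit)

lemma ud: "y \<in> V \<Longrightarrow> pd k u differentiable (at (g1 y, g2 y))"
  using sm2_diff[OF sm2_pd[OF us] gin] .

lemma gradk: "y \<in> V \<Longrightarrow> pd 1 u (g1 y, g2 y) = fst y \<and> pd 2 u (g1 y, g2 y) = snd y"
  using ginv[of y] unfolding grad_def gsplit by (cases y) simp

lemma hsym: "p \<in> \<Omega> \<Longrightarrow> hess u i j p = hess u j i p"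
  unfolding hess_def using pd_sym[OF \<Omega>_open us] by blast

lemma g_pd:
  assumes y: "y \<in> V" and i: "i = 1 \<or> i = 2"
  shows "pd i g1 y = hessinv u 1 i (g y) \<and> pd i g2 y = hessinv u 2 i (g y)"
proof -
  define X where "X = pd i g1 y"
  define Y where "Y = pd i g2 y"
  have e1: "hess u 1 1 (g y) * X + hess u 2 1 (g y) * Y = (if i = 1 then 1 else 0)"
  proof -
    have "pd i (\<lambda>\<eta>. pd 1 u (g1 \<eta>, g2 \<eta>)) y = pd i fst y"
      by (rule pd_cong[OF V_open y]) (simp add: gradk)
    moreover have "pd i (\<lambda>\<eta>. pd 1 u (g1 \<eta>, g2 \<eta>)) y =
        pd 1 (pd 1 u) (g1 y, g2 y) * pd i g1 y + pd 2 (pd 1 u) (g1 y, g2 y) * pd i g2 y"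
      by (rule pd_comp2[OF g1d[OF y] g2d[OF y] ud[OF y]])
    ultimately show ?thesis unfolding X_def Y_def hess_def gsplit pd_fst by simp
  qed
  have e2: "hess u 1 2 (g y) * X + hess u 2 2 (g y) * Y = (if i = 1 then 0 else 1)"
  proof -
    have "pd i (\<lambda>\<eta>. pd 2 u (g1 \<eta>, g2 \<eta>)) y = pd i snd y"
      by (rule pd_cong[OF V_open y]) (simp add: gradk)
    moreover have "pd i (\<lambda>\<eta>. pd 2 u (g1 \<eta>, g2 \<eta>)) y =
        pd 1 (pd 2 u) (g1 y, g2 y) * pd i g1 y + pd 2 (pd 2 u) (g1 y, g2 y) * pd i g2 y"
      by (rule pd_comp2[OF g1d[OF y] g2d[OF y] ud[OF y]])
    ultimately show ?thesis unfolding X_def Y_def hess_def gsplit pd_snd by simp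
  qed
  have J: "hessdet u (g y) \<noteq> 0" using Jpos g\<Omega>[OF y] by fastforce
  define a where "a = hess u 1 1 (g y)"
  define b where "b = hess u 1 2 (g y)"
  define c where "c = hess u 2 1 (g y)"
  define d where "d = hess u 2 2 (g y)"
  have D: "hessdet u (g y) = a * d - b * c" unfolding a_def b_def c_def d_def hessdet_def by simp
  have e1': "a * X + c * Y = (if i = 1 then 1 else 0)" using e1 unfolding a_def c_def .
  have e2': "b * X + d * Y = (if i = 1 then 0 else 1)" using e2 unfolding b_def d_def .
  have ne: "a * d - b * c \<noteq> 0" using J D by simp
  have sX: "(a * d - b * c) * X = (if i = 1 then d else - c)"
  proof -
    have "(a * d - b * c) * X = d * (a * X + c * Y) - c * (b * X + d * Y)" by (simp add: algebra_simps)
    then show ?thesis using e1' e2' by simp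
  qed
  have sY: "(a * d - b * c) * Y = (if i = 1 then - b else a)"
  proof -
    have "(a * d - b * c) * Y = a * (b * X + d * Y) - b * (a * X + c * Y)" by (simp add: algebra_simps)
    then show ?thesis using e1' e2' by simp
  qed
  have bc: "b = c" unfolding b_def c_def using hsym[OF g\<Omega>[OF y]] .
  have X: "X = (if i = 1 then d else - c) / (a * d - b * c)" using sX ne by (simp add: field_simps)
  have Y: "Y = (if i = 1 then - b else a) / (a * d - b * c)" using sY ne by (simp add: field_simps)
  have h: "hessinv u l i (g y) = (if l = 1 \<and> i = 1 then d else if l = 2 \<and> i = 2 then a
       else if l = 1 then - b else - c) / (a * d - b * c)" if "l = 1 \<or> l = 2" for l
    using that i unfolding hessinv_def D a_def b_def c_def d_def by auto
  show ?thesis using i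
  proof
    assume i1: "i = 1"
    show ?thesis unfolding X_def[symmetric] Y_def[symmetric] h[of 1, simplified] h[of 2, simplified]
      using X Y bc i1 by simp
  next
    assume i2: "i = 2"
    show ?thesis unfolding X_def[symmetric] Y_def[symmetric] h[of 1, simplified] h[of 2, simplified]
      using X Y bc i2 by simp
  qed
qed

end


declare One_nat_def [simp del]

definition kk :: "(real \<Rightarrow> real) \<Rightarrow> (real \<times> real \<Rightarrow> real) \<Rightarrow> nat \<Rightarrow> nat \<Rightarrow> real \<times> real \<Rightarrow> real" where
  "kk \<psi> u i j x = (\<psi> (hessdet u x) * inverse (hessdet u x) - deriv \<psi> (hessdet u x)) * hess u j i x"

definition hh :: "(real \<Rightarrow> real) \<Rightarrow> (real \<times> real \<Rightarrow> real) \<Rightarrow> nat \<Rightarrow> nat \<Rightarrow> real \<times> real \<Rightarrow> real" where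
  "hh \<psi> u i j x = pd 1 (kk \<psi> u i j) x * hessinv u 1 j x + pd 2 (kk \<psi> u i j) x * hessinv u 2 j x"

lemma kk_sm2:
  assumes "open S" "smooth2_on S u" "\<forall>p\<in>S. hessdet u p > 0" "smooth1_on {0<..} \<psi>"
  shows "smooth2_on S (kk \<psi> u i j)"
proof -
  have J: "smooth2_on S (hessdet u)" by (rule hessdet_sm2[OF assms(1,2)])
  have Jin: "\<And>x. x \<in> S \<Longrightarrow> hessdet u x \<in> {0<..}" using assms(3) by simp
  have a: "smooth2_on S (\<lambda>x. \<psi> (hessdet u x))" by (rule sm2_comp1[OF assms(1) assms(4) J Jin])
  have b: "smooth2_on S (\<lambda>x. deriv \<psi> (hessdet u x))" by (rule sm2_comp1[OF assms(1) sm1_deriv[OF assms(4)] J Jin])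
  have c: "smooth2_on S (\<lambda>x. inverse (hessdet u x))" using sm2_inverse[OF assms(1) J] assms(3) by blast
  have "smooth2_on S (\<lambda>x. (\<psi> (hessdet u x) * inverse (hessdet u x) - deriv \<psi> (hessdet u x)) * hess u j i x)"
    by (rule sm2_mult[OF assms(1) sm2_sub[OF assms(1) sm2_mult[OF assms(1) a c] b] hess_sm2[OF assms(2)]])
  moreover have "kk \<psi> u i j = (\<lambda>x. (\<psi> (hessdet u x) * inverse (hessdet u x) - deriv \<psi> (hessdet u x)) * hess u j i x)"
    by (rule ext) (simp add: kk_def)
  ultimately show ?thesis by simp
qed

lemma hh_sm2:
  assumes "open S" "smooth2_on S u" "\<forall>p\<in>S. hessdet u p > 0" "smooth1_on {0<..} \<psi>"
  shows "smooth2_on S (hh \<psi> u i j)"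
proof -
  have k: "smooth2_on S (kk \<psi> u i j)" by (rule kk_sm2[OF assms])
  have "smooth2_on S (\<lambda>x. pd 1 (kk \<psi> u i j) x * hessinv u 1 j x + pd 2 (kk \<psi> u i j) x * hessinv u 2 j x)"
    by (intro sm2_add sm2_mult sm2_pd k hessinv_sm2 assms(1,2,3))
  moreover have "hh \<psi> u i j = (\<lambda>x. pd 1 (kk \<psi> u i j) x * hessinv u 1 j x + pd 2 (kk \<psi> u i j) x * hessinv u 2 j x)"
    by (rule ext) (simp add: hh_def)
  ultimately show ?thesis by simp
qed

context LT
begin

lemma g_smooth: "Ck_on k V g1 \<and> Ck_on k V g2"
proof (induction k)
  case 0
  have "continuous_on V g1" "continuous_on V g2"
    using g1d g2d differentiable_imp_continuous_within continuous_at_imp_continuous_on by blast+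
  then show ?case by simp
next
  case (Suc k)
  have hs: "Ck_on k V (\<lambda>y. hessinv u l i (g1 y, g2 y))" for l i
    by (rule Ck_comp2[OF V_open sm2_Ck[OF hessinv_sm2[OF \<Omega>_open us Jpos]] Suc.IH[THEN conjunct1] Suc.IH[THEN conjunct2] gin])
  have p1: "Ck_on k V (pd i g1)" if "i = 1 \<or> i = 2" for i
  proof (rule Ck_cong'[OF V_open hs[of 1 i]])
    fix y assume "y \<in> V" then show "hessinv u 1 i (g1 y, g2 y) = pd i g1 y"
      using g_pd[OF _ that] by (simp add: gsplit)
  qed
  have p2: "Ck_on k V (pd i g2)" if "i = 1 \<or> i = 2" for i
  proof (rule Ck_cong'[OF V_open hs[of 2 i]])
    fix y assume "y \<in> V" then show "hessinv u 2 i (g1 y, g2 y) = pd i g2 y"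
      using g_pd[OF _ that] by (simp add: gsplit)
  qed
  show ?case using p1 p2 g1d g2d by simp
qed

lemma g1s: "smooth2_on V g1" and g2s: "smooth2_on V g2"
  using g_smooth unfolding smooth2_on_def by blast+

lemma ustar_rep:
  assumes leg: "is_legendre_transform \<Omega> u ustar" and y: "y \<in> V"
  shows "ustar y = g1 y * fst y + g2 y * snd y - u (g1 y, g2 y)"
proof -
  have "ustar (grad u (g y)) = fst (g y) * fst (grad u (g y)) + snd (g y) * snd (grad u (g y)) - u (g y)"
    using leg g\<Omega>[OF y] unfolding is_legendre_transform_def by blast
  then show ?thesis using ginv[OF y] by (simp add: g1_def g2_def)
qed

lemma pd_ustar:
  assumes leg: "is_legendre_transform \<Omega> u ustar" and y: "y \<in> V"
  shows "pd i ustar y = (if i = 1 then g1 y else g2 y)"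
proof -
  have "pd i ustar y = pd i (\<lambda>y. (g1 y * fst y + g2 y * snd y) - u (g1 y, g2 y)) y"
    by (rule pd_cong[OF V_open y]) (simp add: ustar_rep[OF leg])
  also have "\<dots> = (pd i g1 y * fst y + g1 y * pd i fst y + (pd i g2 y * snd y + g2 y * pd i snd y))
       - (pd 1 u (g1 y, g2 y) * pd i g1 y + pd 2 u (g1 y, g2 y) * pd i g2 y)"
  proof -
    have df: "fst differentiable (at y)" "snd differentiable (at y)"
      by (simp_all add: bounded_linear_fst bounded_linear_snd bounded_linear_imp_differentiable)
    have du: "u differentiable (at (g1 y, g2 y))" using sm2_diff[OF us gin[OF y]] .
    have d1: "(\<lambda>y. g1 y * fst y) differentiable (at y)" "(\<lambda>y. g2 y * snd y) differentiable (at y)"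
      using g1d[OF y] g2d[OF y] df by simp_all
    have d2: "(\<lambda>y. g1 y * fst y + g2 y * snd y) differentiable (at y)" using d1 by simp
    have d3: "(\<lambda>y. u (g1 y, g2 y)) differentiable (at y)"
    proof -
      have "(\<lambda>y. (g1 y, g2 y)) differentiable (at y)" using g1d[OF y] g2d[OF y] by (simp add: differentiable_Pair)
      then show ?thesis using differentiable_compose[of u "\<lambda>y. (g1 y, g2 y)"] du by simp
    qed
    show ?thesis
      using pd_diff[OF d2 d3, of i] pd_add[OF d1, of i] pd_mult[OF g1d[OF y] df(1), of i]
        pd_mult[OF g2d[OF y] df(2), of i] pd_comp2[OF g1d[OF y] g2d[OF y] du, of i] by simp
  qed
  also have "\<dots> = (if i = 1 then g1 y else g2 y)"
    using gradk[OF y] by (simp add: pd_fst pd_snd algebra_simps)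
  finally show ?thesis .
qed

lemma hess_ustar:
  assumes leg: "is_legendre_transform \<Omega> u ustar" and y: "y \<in> V" and ij: "i = 1 \<or> i = 2" "j = 1 \<or> j = 2"
  shows "hess ustar i j y = hessinv u j i (g y)"
proof -
  have "hess ustar i j y = pd i (if j = 1 then g1 else g2) y"
    unfolding hess_def by (rule pd_cong[OF V_open y]) (simp add: pd_ustar[OF leg])
  also have "\<dots> = hessinv u j i (g y)" using g_pd[OF y ij(1)] ij(2) by auto
  finally show ?thesis .
qed

lemma Jg: "y \<in> V \<Longrightarrow> hessdet u (g y) > 0" using Jpos g\<Omega> by blast

lemma hessdet_ustar:
  assumes leg: "is_legendre_transform \<Omega> u ustar" and y: "y \<in> V"
  shows "hessdet ustar y = inverse (hessdet u (g y))"
proof -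
  define J where "J = hessdet u (g y)"
  have J0: "J \<noteq> 0" using Jg[OF y] unfolding J_def by simp
  have hJ: "hess u 2 2 (g y) * hess u 1 1 (g y) - hess u 2 1 (g y) * hess u 1 2 (g y) = J"
    unfolding J_def hessdet_def by simp
  have "hessdet ustar y = hessinv u 1 1 (g y) * hessinv u 2 2 (g y) - hessinv u 2 1 (g y) * hessinv u 1 2 (g y)"
    unfolding hessdet_def using hess_ustar[OF leg y] by simp
  also have "\<dots> = (hess u 2 2 (g y) * hess u 1 1 (g y) - hess u 2 1 (g y) * hess u 1 2 (g y)) / (J * J)"
    unfolding hessinv_def J_def[symmetric] using J0 by (simp add: field_simps)
  also have "\<dots> = inverse J" unfolding hJ using J0 by (simp add: field_simps)
  finally show ?thesis unfolding J_def .
qed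

lemma hessinv_ustar:
  assumes leg: "is_legendre_transform \<Omega> u ustar" and y: "y \<in> V" and ij: "i = 1 \<or> i = 2" "j = 1 \<or> j = 2"
  shows "hessinv ustar i j y = hess u j i (g y)"
proof -
  have J: "hessdet u (g y) \<noteq> 0" using Jg[OF y] by simp
  show ?thesis using ij
    unfolding hessinv_def[of ustar] hessdet_ustar[OF leg y] using hess_ustar[OF leg y] J
    by (auto simp: hessinv_def field_simps)
qed

lemma inner_ustar:
  assumes leg: "is_legendre_transform \<Omega> u ustar" and y: "y \<in> V" and ij: "i = 1 \<or> i = 2" "j = 1 \<or> j = 2"
    and psi: "smooth1_on {0<..} \<psi>"
  shows "hessdet ustar y * deriv (psi_star \<psi>) (hessdet ustar y) * hessinv ustar i j y = kk \<psi> u i j (g y)"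
proof -
  have J: "hessdet u (g y) > 0" using Jg[OF y] .
  have e: "deriv (psi_star \<psi>) (inverse (hessdet u (g y))) =
     \<psi> (hessdet u (g y)) - deriv \<psi> (hessdet u (g y)) * hessdet u (g y)"
    using psi_star_deriv[OF psi, of "inverse (hessdet u (g y))"] J by simp
  show ?thesis unfolding hessdet_ustar[OF leg y] hessinv_ustar[OF leg y ij] kk_def e
    using J by (simp add: field_simps)
qed

lemma transfer:
  assumes leg: "is_legendre_transform \<Omega> u ustar" and y0: "y0 \<in> V"
    and psi: "smooth1_on {0<..} \<psi>"
  shows "eq2_lhs (psi_star \<psi>) ustar y0 = (\<Sum>i\<in>{1,2}. \<Sum>j\<in>{1,2}.
     pd 1 (hh \<psi> u i j) (g y0) * hessinv u 1 i (g y0) + pd 2 (hh \<psi> u i j) (g y0) * hessinv u 2 i (g y0))"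
proof -
  have tm: "pd i (pd j (\<lambda>q. hessdet ustar q * deriv (psi_star \<psi>) (hessdet ustar q) * hessinv ustar i j q)) y0
     = pd 1 (hh \<psi> u i j) (g y0) * hessinv u 1 i (g y0) + pd 2 (hh \<psi> u i j) (g y0) * hessinv u 2 i (g y0)"
    if ij: "i = 1 \<or> i = 2" "j = 1 \<or> j = 2" for i j
  proof -
    have ks: "smooth2_on \<Omega> (kk \<psi> u i j)" by (rule kk_sm2[OF \<Omega>_open us Jpos psi])
    have hs: "smooth2_on \<Omega> (hh \<psi> u i j)" by (rule hh_sm2[OF \<Omega>_open us Jpos psi])
    have step1: "pd j (\<lambda>q. hessdet ustar q * deriv (psi_star \<psi>) (hessdet ustar q) * hessinv ustar i j q) \<eta>
       = hh \<psi> u i j (g \<eta>)" if \<eta>: "\<eta> \<in> V" for \<eta>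
    proof -
      have "pd j (\<lambda>q. hessdet ustar q * deriv (psi_star \<psi>) (hessdet ustar q) * hessinv ustar i j q) \<eta>
         = pd j (\<lambda>q. kk \<psi> u i j (g1 q, g2 q)) \<eta>"
        by (rule pd_cong[OF V_open \<eta>]) (simp add: inner_ustar[OF leg _ ij psi] gsplit)
      also have "\<dots> = pd 1 (kk \<psi> u i j) (g1 \<eta>, g2 \<eta>) * pd j g1 \<eta> + pd 2 (kk \<psi> u i j) (g1 \<eta>, g2 \<eta>) * pd j g2 \<eta>"
        by (rule pd_comp2[OF g1d[OF \<eta>] g2d[OF \<eta>] sm2_diff[OF ks gin[OF \<eta>]]])
      also have "\<dots> = hh \<psi> u i j (g \<eta>)"
        using g_pd[OF \<eta> ij(2)] unfolding hh_def by (simp add: gsplit)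
      finally show ?thesis .
    qed
    have "pd i (pd j (\<lambda>q. hessdet ustar q * deriv (psi_star \<psi>) (hessdet ustar q) * hessinv ustar i j q)) y0
       = pd i (\<lambda>q. hh \<psi> u i j (g1 q, g2 q)) y0"
      by (rule pd_cong[OF V_open y0]) (simp add: step1 gsplit)
    also have "\<dots> = pd 1 (hh \<psi> u i j) (g1 y0, g2 y0) * pd i g1 y0 + pd 2 (hh \<psi> u i j) (g1 y0, g2 y0) * pd i g2 y0"
      by (rule pd_comp2[OF g1d[OF y0] g2d[OF y0] sm2_diff[OF hs gin[OF y0]]])
    also have "\<dots> = pd 1 (hh \<psi> u i j) (g y0) * hessinv u 1 i (g y0) + pd 2 (hh \<psi> u i j) (g y0) * hessinv u 2 i (g y0)"
      using g_pd[OF y0 ij(1)] by (simp add: gsplit)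
    finally show ?thesis .
  qed
  show ?thesis unfolding eq2_lhs_def using tm by simp
qed

end


declare One_nat_def [simp del]

lemma pd_neg: "f differentiable (at p) \<Longrightarrow> pd i (\<lambda>x. - f x) p = - pd i f p"
  using pd_diff[of "\<lambda>x. 0" p f i] by (simp add: pd_const)

locale XS =
  fixes \<Omega> u \<psi>
  assumes \<Omega>_open: "open \<Omega>" and us: "smooth2_on \<Omega> u" and Jpos: "\<forall>p\<in>\<Omega>. hessdet u p > 0"
    and psi: "smooth1_on {0<..} \<psi>"
begin

abbreviation "J \<equiv> hessdet u"
definition "P x = deriv \<psi> (J x)"
definition "P2 x = deriv (deriv \<psi>) (J x)"
definition "Q j x = P2 x * pd j J x"
definition "G x = \<psi> (J x) * inverse (J x) - P x"

lemma Js: "smooth2_on \<Omega> J" by (rule hessdet_sm2[OF \<Omega>_open us])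
lemma Jin: "x \<in> \<Omega> \<Longrightarrow> J x \<in> {0<..}" using Jpos by simp
lemma hs: "smooth2_on \<Omega> (hess u i j)" by (rule hess_sm2[OF us])
lemma hd: "x \<in> \<Omega> \<Longrightarrow> hess u i j differentiable (at x)" using sm2_diff[OF hs] .
lemma hpd: "x \<in> \<Omega> \<Longrightarrow> pd l (hess u i j) differentiable (at x)" using sm2_diff[OF sm2_pd[OF hs]] .
lemma Jd: "x \<in> \<Omega> \<Longrightarrow> J differentiable (at x)" using sm2_diff[OF Js] .

lemma Ps: "smooth2_on \<Omega> P"
  unfolding P_def[abs_def] by (rule sm2_comp1[OF \<Omega>_open sm1_deriv[OF psi] Js Jin])
lemma P2s: "smooth2_on \<Omega> P2"
  unfolding P2_def[abs_def] by (rule sm2_comp1[OF \<Omega>_open sm1_deriv[OF sm1_deriv[OF psi]] Js Jin])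
lemma Qs: "smooth2_on \<Omega> (Q j)"
  unfolding Q_def[abs_def] by (rule sm2_mult[OF \<Omega>_open P2s sm2_pd[OF Js]])
lemma Qd: "x \<in> \<Omega> \<Longrightarrow> Q j differentiable (at x)" using sm2_diff[OF Qs] .
lemma cs: "smooth2_on \<Omega> (cof u i j)" by (rule cof_sm2[OF \<Omega>_open us])
lemma cd: "x \<in> \<Omega> \<Longrightarrow> cof u i j differentiable (at x)" using sm2_diff[OF cs] .

lemma pdP: "x \<in> \<Omega> \<Longrightarrow> pd l P x = P2 x * pd l J x"
  unfolding P_def[abs_def] P2_def
  by (rule pd_comp1[OF sm1_diff[OF sm1_deriv[OF psi] Jin] Jd])

lemma pdJ: "x \<in> \<Omega> \<Longrightarrow> pd l J x = pd l (hess u 1 1) x * hess u 2 2 x + hess u 1 1 x * pd l (hess u 2 2) x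
    - (pd l (hess u 1 2) x * hess u 2 1 x + hess u 1 2 x * pd l (hess u 2 1) x)"
proof -
  assume x: "x \<in> \<Omega>"
  have "J = (\<lambda>p. hess u 1 1 p * hess u 2 2 p - hess u 1 2 p * hess u 2 1 p)"
    by (rule ext) (simp add: hessdet_def)
  then have e: "pd l J x = pd l (\<lambda>p. hess u 1 1 p * hess u 2 2 p - hess u 1 2 p * hess u 2 1 p) x" by simp
  show ?thesis unfolding e
    using pd_diff[OF differentiable_mult[OF hd[OF x] hd[OF x]] differentiable_mult[OF hd[OF x] hd[OF x]]]
      pd_mult[OF hd[OF x] hd[OF x]] by simp
qed

lemma pdG: "x \<in> \<Omega> \<Longrightarrow> pd l G x = deriv \<psi> (J x) * pd l J x * inverse (J x)
    + \<psi> (J x) * ((-1) * inverse (J x) * inverse (J x) * pd l J x) - P2 x * pd l J x"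
proof -
  assume x: "x \<in> \<Omega>"
  have d1: "(\<lambda>x. \<psi> (J x)) differentiable (at x)"
    using differentiable_compose[of \<psi> J x UNIV] Jd[OF x] sm1_diff[OF psi Jin[OF x]] real_differentiable_def by blast
  have d2: "(\<lambda>x. inverse (J x)) differentiable (at x)"
    using differentiable_compose[of inverse J x UNIV] Jd[OF x] inv_deriv[of "J x"] Jpos x real_differentiable_def by fastforce
  have d3: "P differentiable (at x)" using sm2_diff[OF Ps x] .
  have e: "pd l G x = pd l (\<lambda>x. \<psi> (J x)) x * inverse (J x) + \<psi> (J x) * pd l (\<lambda>x. inverse (J x)) x - pd l P x"
    unfolding G_def[abs_def]
    using pd_diff[OF differentiable_mult[OF d1 d2] d3] pd_mult[OF d1 d2] by simp
  have J0: "J x \<noteq> 0" using Jpos x by fastforce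
  show ?thesis unfolding e
    using pd_comp1[OF sm1_diff[OF psi Jin[OF x]] Jd[OF x]] pd_comp1[OF inv_deriv[OF J0] Jd[OF x]] pdP[OF x]
    by (simp add: algebra_simps)
qed

lemma Gs: "smooth2_on \<Omega> G"
proof -
  have iJ: "smooth2_on \<Omega> (\<lambda>x. inverse (J x))"
    by (rule sm2_inverse[OF \<Omega>_open Js]) (use Jpos in blast)
  have "smooth2_on \<Omega> (\<lambda>x. \<psi> (J x) * inverse (J x) - P x)"
    by (intro sm2_sub sm2_mult \<Omega>_open Ps sm2_comp1[OF \<Omega>_open psi Js Jin] iJ)
  then show ?thesis unfolding G_def[abs_def] .
qed

lemma kk_eq: "kk \<psi> u i j = (\<lambda>x. G x * hess u j i x)"
  by (rule ext) (simp add: kk_def G_def P_def)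

lemma pdkk: "x \<in> \<Omega> \<Longrightarrow> pd l (kk \<psi> u i j) x = pd l G x * hess u j i x + G x * pd l (hess u j i) x"
  unfolding kk_eq by (rule pd_mult[OF sm2_diff[OF Gs] hd])

end


declare One_nat_def [simp del]

context XS
begin

lemma s0: "x \<in> \<Omega> \<Longrightarrow> hess u 2 1 x = hess u 1 2 x"
  unfolding hess_def using pd_sym[OF \<Omega>_open us] by metis

lemma s1: "x \<in> \<Omega> \<Longrightarrow> pd l (hess u 2 1) x = pd l (hess u 1 2) x"
  by (rule pd_cong[OF \<Omega>_open]) (simp_all add: s0)

lemma s3: "x \<in> \<Omega> \<Longrightarrow> pd 2 (hess u 1 1) x = pd 1 (hess u 1 2) x"
proof -
  assume x: "x \<in> \<Omega>"
  have "pd 2 (hess u 1 1) x = pd 2 (pd 1 (pd 1 u)) x" unfolding hess_def[abs_def] ..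
  also have "\<dots> = pd 1 (pd 2 (pd 1 u)) x" by (rule pd_sym[OF \<Omega>_open sm2_pd[OF us] x])
  also have "\<dots> = pd 1 (hess u 2 1) x" unfolding hess_def[abs_def] ..
  also have "\<dots> = pd 1 (hess u 1 2) x" by (rule s1[OF x])
  finally show ?thesis .
qed

lemma s4: "x \<in> \<Omega> \<Longrightarrow> pd 1 (hess u 2 2) x = pd 2 (hess u 1 2) x"
proof -
  assume x: "x \<in> \<Omega>"
  have "pd 1 (hess u 2 2) x = pd 1 (pd 2 (pd 2 u)) x" unfolding hess_def[abs_def] ..
  also have "\<dots> = pd 2 (pd 1 (pd 2 u)) x" by (rule pd_sym[OF \<Omega>_open sm2_pd[OF us] x])
  also have "\<dots> = pd 2 (hess u 1 2) x" unfolding hess_def[abs_def] ..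
  finally show ?thesis .
qed

lemma V_id:
  assumes x: "x \<in> \<Omega>" and i: "i = 1 \<or> i = 2"
  shows "hh \<psi> u i 1 x + hh \<psi> u i 2 x = - Q i x"
proof -
  define a where "a = hess u 1 1 x"
  define b where "b = hess u 1 2 x"
  define d where "d = hess u 2 2 x"
  define t1 where "t1 = pd 1 (hess u 1 1) x"
  define t2 where "t2 = pd 1 (hess u 1 2) x"
  define t3 where "t3 = pd 2 (hess u 1 2) x"
  define t4 where "t4 = pd 2 (hess u 2 2) x"
  define JJ where "JJ = J x"
  define ps where "ps = \<psi> (J x)"
  define p where "p = P x"
  define p2 where "p2 = P2 x"
  have hJ: "JJ = a * d - b * b" unfolding JJ_def a_def b_def d_def hessdet_def using s0[OF x] by simp
  have J0: "a * d - b * b \<noteq> 0" using Jpos x hJ unfolding JJ_def by fastforce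
  define iJ where "iJ = inverse JJ"
  have JiJ: "JJ * iJ = 1" unfolding iJ_def using J0 hJ by simp
  define J1 where "J1 = t1 * d + a * t3 - (t2 * b + b * t2)"
  define J2 where "J2 = t2 * d + a * t4 - (t3 * b + b * t3)"
  have pJ1: "pd 1 J x = J1" unfolding J1_def using pdJ[OF x, of 1] s0[OF x] s1[OF x] s3[OF x] s4[OF x]
    unfolding a_def b_def d_def t1_def t2_def t3_def t4_def by simp
  have pJ2: "pd 2 J x = J2" unfolding J2_def using pdJ[OF x, of 2] s0[OF x] s1[OF x] s3[OF x] s4[OF x]
    unfolding a_def b_def d_def t1_def t2_def t3_def t4_def by simp
  have Gx: "G x = ps * iJ - p" unfolding iJ_def G_def ps_def JJ_def p_def ..
  have G1: "pd 1 G x = p * J1 * iJ + ps * ((-1) * iJ * iJ * J1) - p2 * J1"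
    using pdG[OF x, of 1] unfolding pJ1 ps_def iJ_def JJ_def p_def P_def p2_def by simp
  have G2: "pd 2 G x = p * J2 * iJ + ps * ((-1) * iJ * iJ * J2) - p2 * J2"
    using pdG[OF x, of 2] unfolding pJ2 ps_def iJ_def JJ_def p_def P_def p2_def by simp
  have hi: "hessinv u 1 1 x = d * iJ" "hessinv u 2 2 x = a * iJ"
     "hessinv u 1 2 x = - b * iJ" "hessinv u 2 1 x = - b * iJ"
    unfolding hessinv_def iJ_def JJ_def a_def b_def d_def using s0[OF x] by (simp_all add: divide_inverse)
  have k: "pd l (kk \<psi> u i j) x = pd l G x * hess u j i x + G x * pd l (hess u j i) x" for l i j
    by (rule pdkk[OF x])
  have hv: "hess u 1 1 x = a" "hess u 1 2 x = b" "hess u 2 1 x = b" "hess u 2 2 x = d"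
    "pd 1 (hess u 1 1) x = t1" "pd 2 (hess u 1 1) x = t2"
    "pd 1 (hess u 1 2) x = t2" "pd 2 (hess u 1 2) x = t3"
    "pd 1 (hess u 2 1) x = t2" "pd 2 (hess u 2 1) x = t3"
    "pd 1 (hess u 2 2) x = t3" "pd 2 (hess u 2 2) x = t4"
    unfolding a_def b_def d_def t1_def t2_def t3_def t4_def using s0[OF x] s1[OF x] s3[OF x] s4[OF x] by simp_all
  have Qi: "Q 1 x = p2 * J1" "Q 2 x = p2 * J2" unfolding Q_def p2_def pJ1 pJ2 by simp_all
  show ?thesis using i
  proof
    assume i1: "i = 1"
    show ?thesis unfolding i1 hh_def k hv hi Qi G1 G2 Gx using JiJ hJ J1_def by algebra
  next
    assume i2: "i = 2"
    show ?thesis unfolding i2 hh_def k hv hi Qi G1 G2 Gx using JiJ hJ J2_def by algebra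
  qed
qed

end


declare One_nat_def [simp del]

context XS
begin

lemma cof_vals: "cof u 1 1 = hess u 2 2" "cof u 2 2 = hess u 1 1"
   "cof u 1 2 = (\<lambda>p. - hess u 1 2 p)" "cof u 2 1 = (\<lambda>p. - hess u 2 1 p)"
  unfolding cof_def by simp_all

lemma hneg: "x \<in> \<Omega> \<Longrightarrow> pd l (\<lambda>p. - hess u i j p) x = - pd l (hess u i j) x"
  by (rule pd_neg[OF hd])

lemma piola_row: "x \<in> \<Omega> \<Longrightarrow> i = 1 \<or> i = 2 \<Longrightarrow> pd 1 (cof u i 1) x + pd 2 (cof u i 2) x = 0"
  by (auto simp: cof_vals hneg s1 s3 s4)

lemma piola_col: "x \<in> \<Omega> \<Longrightarrow> j = 1 \<or> j = 2 \<Longrightarrow> pd 1 (cof u 1 j) x + pd 2 (cof u 2 j) x = 0"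
  by (auto simp: cof_vals hneg s1 s3 s4)

definition "A i j q = J q * deriv \<psi> (J q) * hessinv u i j q"

lemma A_eq: "q \<in> \<Omega> \<Longrightarrow> A i j q = P q * cof u i j q"
  unfolding A_def P_def hessinv_alt using Jpos by fastforce

lemma As: "smooth2_on \<Omega> (A i j)"
  by (rule sm2_cong[OF \<Omega>_open sm2_mult[OF \<Omega>_open Ps cs[of i j]]]) (simp add: A_eq)

lemma hhs: "smooth2_on \<Omega> (hh \<psi> u i j)" by (rule hh_sm2[OF \<Omega>_open us Jpos psi])

lemma pdA: "x \<in> \<Omega> \<Longrightarrow> pd j (A i j) x = Q j x * cof u i j x + P x * pd j (cof u i j) x"
proof -
  assume x: "x \<in> \<Omega>"
  have "pd j (A i j) x = pd j (\<lambda>q. P q * cof u i j q) x" by (rule pd_cong[OF \<Omega>_open x]) (simp add: A_eq)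
  also have "\<dots> = pd j P x * cof u i j x + P x * pd j (cof u i j) x" by (rule pd_mult[OF sm2_diff[OF Ps x] cd[OF x]])
  finally show ?thesis unfolding Q_def pdP[OF x] by simp
qed

lemma Erow:
  assumes x0: "x0 \<in> \<Omega>" and i: "i = 1 \<or> i = 2"
  shows "pd i (pd 1 (A i 1)) x0 + pd i (pd 2 (A i 2)) x0
     = pd i (Q 1) x0 * cof u i 1 x0 + Q 1 x0 * pd i (cof u i 1) x0
     + (pd i (Q 2) x0 * cof u i 2 x0 + Q 2 x0 * pd i (cof u i 2) x0)"
proof -
  have W: "pd 1 (A i 1) x + pd 2 (A i 2) x = Q 1 x * cof u i 1 x + Q 2 x * cof u i 2 x" if x: "x \<in> \<Omega>" for x
  proof -
    have "P x * pd 1 (cof u i 1) x + P x * pd 2 (cof u i 2) x = 0"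
      using piola_row[OF x i] by (simp add: distrib_left[symmetric])
    then show ?thesis using pdA[OF x, of 1 i] pdA[OF x, of 2 i] by (simp add: algebra_simps)
  qed
  have "pd i (pd 1 (A i 1)) x0 + pd i (pd 2 (A i 2)) x0 = pd i (\<lambda>x. pd 1 (A i 1) x + pd 2 (A i 2) x) x0"
    by (rule pd_add[symmetric]) (rule sm2_diff[OF sm2_pd[OF As] x0])+
  also have "\<dots> = pd i (\<lambda>x. Q 1 x * cof u i 1 x + Q 2 x * cof u i 2 x) x0"
    by (rule pd_cong[OF \<Omega>_open x0]) (simp add: W)
  also have "\<dots> = pd i (Q 1) x0 * cof u i 1 x0 + Q 1 x0 * pd i (cof u i 1) x0
     + (pd i (Q 2) x0 * cof u i 2 x0 + Q 2 x0 * pd i (cof u i 2) x0)"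
    by (simp add: pd_add pd_mult Qd[OF x0] cd[OF x0])
  finally show ?thesis .
qed

end


declare One_nat_def [simp del]

context XS
begin

lemma T_row:
  assumes x0: "x0 \<in> \<Omega>" and i: "i = 1 \<or> i = 2"
  shows "(\<Sum>j\<in>{1,2}. pd 1 (hh \<psi> u i j) x0 * hessinv u 1 i x0 + pd 2 (hh \<psi> u i j) x0 * hessinv u 2 i x0)
     = - (pd 1 (Q i) x0 * hessinv u 1 i x0 + pd 2 (Q i) x0 * hessinv u 2 i x0)"
proof -
  have m: "pd m (hh \<psi> u i 1) x0 + pd m (hh \<psi> u i 2) x0 = - pd m (Q i) x0" for m
  proof -
    have "pd m (hh \<psi> u i 1) x0 + pd m (hh \<psi> u i 2) x0 = pd m (\<lambda>x. hh \<psi> u i 1 x + hh \<psi> u i 2 x) x0"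
      by (rule pd_add[symmetric]) (rule sm2_diff[OF hhs x0])+
    also have "\<dots> = pd m (\<lambda>x. - Q i x) x0"
      by (rule pd_cong[OF \<Omega>_open x0]) (simp add: V_id[OF _ i])
    also have "\<dots> = - pd m (Q i) x0" by (rule pd_neg[OF Qd[OF x0]])
    finally show ?thesis .
  qed
  have "(\<Sum>j\<in>{1,2}. pd 1 (hh \<psi> u i j) x0 * hessinv u 1 i x0 + pd 2 (hh \<psi> u i j) x0 * hessinv u 2 i x0)
     = (pd 1 (hh \<psi> u i 1) x0 + pd 1 (hh \<psi> u i 2) x0) * hessinv u 1 i x0
       + (pd 2 (hh \<psi> u i 1) x0 + pd 2 (hh \<psi> u i 2) x0) * hessinv u 2 i x0"
    by (simp add: algebra_simps)
  also have "\<dots> = (- pd 1 (Q i) x0) * hessinv u 1 i x0 + (- pd 2 (Q i) x0) * hessinv u 2 i x0"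
    unfolding m ..
  finally show ?thesis by simp
qed

lemma E_identity:
  assumes x0: "x0 \<in> \<Omega>"
  shows "eq2_lhs \<psi> u x0 = - J x0 * (\<Sum>i\<in>{1,2}. \<Sum>j\<in>{1,2}.
     pd 1 (hh \<psi> u i j) x0 * hessinv u 1 i x0 + pd 2 (hh \<psi> u i j) x0 * hessinv u 2 i x0)"
proof -
  have Aeq: "(\<lambda>q. hessdet u q * deriv \<psi> (hessdet u q) * hessinv u i j q) = A i j" for i j
    by (rule ext) (simp add: A_def)
  have E: "eq2_lhs \<psi> u x0 = (pd 1 (pd 1 (A 1 1)) x0 + pd 1 (pd 2 (A 1 2)) x0)
      + (pd 2 (pd 1 (A 2 1)) x0 + pd 2 (pd 2 (A 2 2)) x0)"
    unfolding eq2_lhs_def Aeq by simp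
  have c1: "Q 1 x0 * pd 1 (cof u 1 1) x0 + Q 1 x0 * pd 2 (cof u 2 1) x0 = 0"
    using piola_col[OF x0, of 1] by (simp add: distrib_left[symmetric])
  have c2: "Q 2 x0 * pd 1 (cof u 1 2) x0 + Q 2 x0 * pd 2 (cof u 2 2) x0 = 0"
    using piola_col[OF x0, of 2] by (simp add: distrib_left[symmetric])
  have E2: "eq2_lhs \<psi> u x0 = pd 1 (Q 1) x0 * cof u 1 1 x0 + pd 1 (Q 2) x0 * cof u 1 2 x0
      + pd 2 (Q 1) x0 * cof u 2 1 x0 + pd 2 (Q 2) x0 * cof u 2 2 x0"
    unfolding E Erow[OF x0, of 1, simplified] Erow[OF x0, of 2, simplified]
    using c1 c2 by (simp add: algebra_simps)
  have T: "(\<Sum>i\<in>{1,2}. \<Sum>j\<in>{1,2}.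
     pd 1 (hh \<psi> u i j) x0 * hessinv u 1 i x0 + pd 2 (hh \<psi> u i j) x0 * hessinv u 2 i x0)
     = - (pd 1 (Q 1) x0 * hessinv u 1 1 x0 + pd 2 (Q 1) x0 * hessinv u 2 1 x0)
       - (pd 1 (Q 2) x0 * hessinv u 1 2 x0 + pd 2 (Q 2) x0 * hessinv u 2 2 x0)"
    using T_row[OF x0, of 1, simplified] T_row[OF x0, of 2, simplified] by simp
  have J0: "J x0 \<noteq> 0" using Jpos x0 by fastforce
  show ?thesis unfolding E2 T unfolding hessinv_alt using J0 by (simp add: field_simps)
qed

end


declare One_nat_def [simp del]

lemma pointwise:
  assumes psi_smooth: "smooth1_on {0<..} \<psi>"
    and U: "open \<Omega>" and us: "smooth2_on \<Omega> u"
    and Jp: "\<forall>p\<in>\<Omega>. hessdet u p > 0"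
    and leg: "is_legendre_transform \<Omega> u ustar"
    and x0: "x0 \<in> \<Omega>"
  shows "eq2_lhs \<psi> u x0 = 0 \<longleftrightarrow> eq2_lhs (psi_star \<psi>) ustar (grad u x0) = 0"
proof -
  have Jn: "\<forall>p\<in>\<Omega>. hessdet u p \<noteq> 0" using Jp by fastforce
  obtain V g where V: "open V" "grad u x0 \<in> V" "\<And>y. y \<in> V \<Longrightarrow> g y \<in> \<Omega>" "g (grad u x0) = x0"
    "\<And>y. y \<in> V \<Longrightarrow> grad u (g y) = y" "\<And>y. y \<in> V \<Longrightarrow> g differentiable (at y)"
    using local_inverse[OF U us Jn x0] by blast
  interpret LT \<Omega> u V g
    by (unfold_locales) (use U us Jp V in auto)
  interpret XS \<Omega> u \<psi>
    by (unfold_locales) (use U us Jp psi_smooth in auto)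
  have t: "eq2_lhs (psi_star \<psi>) ustar (grad u x0) = (\<Sum>i\<in>{1,2}. \<Sum>j\<in>{1,2}.
     pd 1 (hh \<psi> u i j) x0 * hessinv u 1 i x0 + pd 2 (hh \<psi> u i j) x0 * hessinv u 2 i x0)"
    using transfer[OF leg V(2) psi_smooth] V(4) by simp
  have J0: "hessdet u x0 \<noteq> 0" using Jn x0 by blast
  show ?thesis unfolding E_identity[OF x0] t using J0 by simp
qed

theorem mainTheorem6:
  fixes \<psi> :: "real \<Rightarrow> real"
    and u ustar :: "real \<times> real \<Rightarrow> real"
    and \<Omega> :: "(real \<times> real) set"
  assumes psi_smooth: "smooth1_on {0<..} \<psi>"
    and psi_convex: "strict_convex_on {0<..} \<psi>"
    and dom: "open \<Omega>" "convex \<Omega>"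
    and u_smooth: "smooth2_on \<Omega> u"
    and u_convex: "strict_convex_on \<Omega> u"
    and u_nondeg: "\<forall>p\<in>\<Omega>. hess u 1 1 p > 0 \<and> hessdet u p > 0"
    and leg: "is_legendre_transform \<Omega> u ustar"
  shows "smooth1_on {0<..} (psi_star \<psi>) \<and> strict_convex_on {0<..} (psi_star \<psi>) \<and>
         (satisfies_eq2 \<psi> \<Omega> u \<longleftrightarrow> satisfies_eq2 (psi_star \<psi>) (grad u ` \<Omega>) ustar)"
proof (intro conjI)
  show "smooth1_on {0<..} (psi_star \<psi>)" by (rule psi_star_smooth[OF psi_smooth])
  show "strict_convex_on {0<..} (psi_star \<psi>)" by (rule psi_star_convex[OF psi_convex])
  have Jp: "\<forall>p\<in>\<Omega>. hessdet u p > 0" using u_nondeg by blast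
  have pw: "\<And>x. x \<in> \<Omega> \<Longrightarrow> eq2_lhs \<psi> u x = 0 \<longleftrightarrow> eq2_lhs (psi_star \<psi>) ustar (grad u x) = 0"
    using pointwise[OF psi_smooth dom(1) u_smooth Jp leg] by blast
  show "satisfies_eq2 \<psi> \<Omega> u \<longleftrightarrow> satisfies_eq2 (psi_star \<psi>) (grad u ` \<Omega>) ustar"
    unfolding satisfies_eq2_def using pw by blast
qed


end
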